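(* Let $u_0\in L^2([0,1])$ satisfy $2e^{\Vert u_0\Vert_{L^2}}\Vert u_0\Vert_{L^2}<1$, and let $u(t,\cdot)=\Phi^t_{\mathcal{B}}(u_0)$ be the solution of the Burgers problem $$\partial_t u=-u\partial_x u+\partial_{xx}u,\quad u(t,0)=u(t,1)=0,\quad u(0,x)=u_0(x).$$ Then for every $t>0$ and every $x\in[0,1]$, $$u(t,x)=\sum_{\nu\in\mathcal{A}} e^{\lambda_\nu t}\,\varphi_\nu(u_0)\,a_\nu(x),$$ where for each fixed $t>0$ the series converges absolutely (so its sum does not depend on the order of summation) and uniformly in $x\in[0,1]$.
   Context: Cole–Hopf transforms: for $u\in L^2([0,1])$, $H(u)(x)=\dfrac{e^{-\frac12\int_0^x u(s)ds}}{\int_0^1 e^{-\frac12\int_0^y u(s)ds}\,dy}$ (so $H(u)>0$ and $\int_0^1H(u)=1$); for $v>0$ with weak derivative in $L^2$ and $\int_0^1 v=1$, $C(v)=-2\,\partial_x v/v$. For $m\ge1$ let $e_m(x)=\sqrt2\cos(m\pi x)$ and $c_m(v)=\int_0^1 v(s)e_m(s)\,ds$. The heat flow with Neumann conditions is $\Phi^t_{\mathcal{C}}(v_0)=1+\sum_{m\ge1}e^{-m^2\pi^2t}c_m(v_0)e_m$ for $\int_0^1 v_0=1$, and the Burgers solution is given through the Cole–Hopf correspondence by $\Phi^t_{\mathcal{B}}(u_0)=C(\Phi^t_{\mathcal{C}}(H(u_0)))$. Define $l_n(u_0)=c_n(H(u_0))$ for $n\ge1$. Index set: $\mathcal{A}$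 is the set of finite tuples $\nu=(n_0,n_1,\dots,n_{\alpha(\nu)})$ with $\alpha(\nu)\in\mathbb{N}=\{0,1,2,\dots\}$, $n_0\in\mathbb{N}$ and $n_i\in\mathbb{N}\setminus\{0\}$ for $1\le i\le\alpha(\nu)$. For $\nu\in\mathcal{A}$: $\lambda_\nu=-\pi^2\sum_{k=0}^{\alpha(\nu)}n_k^2$; $a_\nu(x)=(-1)^{\alpha(\nu)}2^{\frac{\alpha(\nu)+3}{2}}n_0\pi\sin(n_0\pi x)\prod_{k=1}^{\alpha(\nu)}\cos(n_k\pi x)$ (empty product $=1$; note $a_\nu\equiv0$ when $n_0=0$); $\varphi_\nu(u_0)=\prod_{k=0}^{\alpha(\nu)}l_{n_k}(u_0)$ (only needed when $n_0\ge1$, since otherwise $a_\nu=0$). *)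

theory Defs
  imports "HOL-Analysis.Analysis"
begin

text \<open>Functions on [0,1] are represented as real functions on the reals; integrals are
Lebesgue integrals over subintervals of [0,1].\<close>

definition L2norm01 :: "(real \<Rightarrow> real) \<Rightarrow> real" where
  "L2norm01 u = sqrt (LINT s:{0..1}|lborel. (u s)^2)"

definition e_cos :: "nat \<Rightarrow> real \<Rightarrow> real" where
  "e_cos m x = sqrt 2 * cos (real m * pi * x)"

definition coef :: "nat \<Rightarrow> (real \<Rightarrow> real) \<Rightarrow> real" where
  "coef m v = (LINT s:{0..1}|lborel. v s * e_cos m s)"

definition ColeHopf_H :: "(real \<Rightarrow> real) \<Rightarrow> real \<Rightarrow> real" where
  "ColeHopf_H u x =
     exp (- (1/2) * (LINT s:{0..x}|lborel. u s)) /
     (LINT y:{0..1}|lborel. exp (- (1/2) * (LINT s:{0..y}|lborel. u s)))"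

definition ColeHopf_C :: "(real \<Rightarrow> real) \<Rightarrow> real \<Rightarrow> real" where
  "ColeHopf_C v x = -2 * deriv v x / v x"

definition heat_flow :: "real \<Rightarrow> (real \<Rightarrow> real) \<Rightarrow> real \<Rightarrow> real" where
  "heat_flow t v0 x =
     1 + (\<Sum>m. exp (- ((real (Suc m))^2 * pi^2 * t)) * coef (Suc m) v0 * e_cos (Suc m) x)"

definition burgers_flow :: "real \<Rightarrow> (real \<Rightarrow> real) \<Rightarrow> real \<Rightarrow> real" where
  "burgers_flow t u0 = ColeHopf_C (heat_flow t (ColeHopf_H u0))"

definition l_coef :: "nat \<Rightarrow> (real \<Rightarrow> real) \<Rightarrow> real" where
  "l_coef n u0 = coef n (ColeHopf_H u0)"

text \<open>Index set: a tuple (n_0, n_1, ..., n_\<alpha>) is a nonempty list whose head is n_0 and whose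
tail entries are positive; \<alpha> = length - 1.\<close>
definition idxA :: "nat list set" where
  "idxA = {\<nu>. \<nu> \<noteq> [] \<and> (\<forall>k\<in>set (tl \<nu>). 0 < k)}"

definition lam :: "nat list \<Rightarrow> real" where
  "lam \<nu> = - (pi^2 * (\<Sum>k\<leftarrow>\<nu>. (real k)^2))"

definition a_fun :: "nat list \<Rightarrow> real \<Rightarrow> real" where
  "a_fun \<nu> x = (-1) ^ (length \<nu> - 1) * 2 powr ((real (length \<nu> - 1) + 3) / 2)
      * real (hd \<nu>) * pi * sin (real (hd \<nu>) * pi * x)
      * (\<Prod>k\<leftarrow>tl \<nu>. cos (real k * pi * x))"

definition phi :: "nat list \<Rightarrow> (real \<Rightarrow> real) \<Rightarrow> real" where
  "phi \<nu> u0 = (\<Prod>k\<leftarrow>\<nu>. l_coef k u0)"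

definition series_term :: "real \<Rightarrow> (real \<Rightarrow> real) \<Rightarrow> nat list \<Rightarrow> real \<Rightarrow> real" where
  "series_term t u0 \<nu> x = exp (lam \<nu> * t) * phi \<nu> u0 * a_fun \<nu> x"

end

theory Submission
  imports Defs
begin
definition PL :: "nat list set" where "PL = {xs. \<forall>k\<in>set xs. 0 < k}"
definition LL :: "nat \<Rightarrow> nat list set" where
  "LL n = {xs. (\<forall>k\<in>set xs. 0 < k) \<and> length xs = n}"

lemma LL_0: "LL 0 = {[]}" by (auto simp: LL_def)

lemma LL_Suc: "LL (Suc n) = (\<lambda>(k,xs). k # xs) ` ({0<..} \<times> LL n)"
  by (auto simp: LL_def length_Suc_conv image_iff)

lemma abs_prod_list: "\<bar>prod_list (map (b::nat\<Rightarrow>real) xs)\<bar> = prod_list (map (\<lambda>k. \<bar>b k\<bar>) xs)"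
  by (induction xs) (auto simp: abs_mult)

lemma prod_list_nonneg': "(\<And>k. 0 \<le> (b::nat\<Rightarrow>real) k) \<Longrightarrow> 0 \<le> prod_list (map b xs)"
  by (induction xs) auto

lemma LL_has_sum:
  fixes b :: "nat \<Rightarrow> real"
  assumes "(\<lambda>k. \<bar>b k\<bar>) summable_on {0<..}"
  shows "((\<lambda>xs. prod_list (map b xs)) has_sum (infsum b {0<..})^n) (LL n)"
  using assms
proof (induction n arbitrary: b)
  case 0
  have "((\<lambda>xs. prod_list (map b xs)) has_sum (\<Sum>xs\<in>{[]}. prod_list (map b xs))) {[]}"
    by (rule has_sum_finite) simp
  then show ?case by (simp add: LL_0)
next
  case (Suc n b)
  define W where "W = infsum b {0<..}"
  define W' where "W' = infsum (\<lambda>k. \<bar>b k\<bar>) {0<..}"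
  have h1: "((\<lambda>xs. prod_list (map b xs)) has_sum W^n) (LL n)"
    using Suc.IH[OF Suc.prems] by (simp add: W_def)
  have h2: "((\<lambda>xs. prod_list (map (\<lambda>k. \<bar>b k\<bar>) xs)) has_sum W'^n) (LL n)"
    using Suc.IH[of "\<lambda>k. \<bar>b k\<bar>"] Suc.prems by (simp add: W'_def)
  have bs: "b summable_on {0<..}"
    using Suc.prems abs_summable_summable by (metis (no_types, lifting) real_norm_def summable_on_cong)
  have inj: "inj_on (\<lambda>(k,xs). k # xs) ({0<..} \<times> LL n)"
    by (auto simp: inj_on_def)
  have sabs: "(\<lambda>(k,xs). \<bar>b k\<bar> * prod_list (map (\<lambda>k. \<bar>b k\<bar>) xs)) summable_on ({0<..} \<times> LL n)"
  proof (rule summable_on_SigmaI[where g="\<lambda>k. \<bar>b k\<bar> * W'^n"])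
    show "((\<lambda>y. case (x, y) of (k, xs) \<Rightarrow> \<bar>b k\<bar> * prod_list (map (\<lambda>k. \<bar>b k\<bar>) xs)) has_sum \<bar>b x\<bar> * W' ^ n) (LL n)" for x
      using has_sum_cmult_right[OF h2, of "\<bar>b x\<bar>"] by simp
    show "(\<lambda>k. \<bar>b k\<bar> * W' ^ n) summable_on {0<..}"
      using summable_on_cmult_left[OF Suc.prems] by simp
    show "0 \<le> (case (x, y) of (k, xs) \<Rightarrow> \<bar>b k\<bar> * prod_list (map (\<lambda>k. \<bar>b k\<bar>) xs))" for x y
      by (simp add: prod_list_nonneg')
  qed
  have ssig: "(\<lambda>(k,xs). b k * prod_list (map b xs)) summable_on ({0<..} \<times> LL n)"
    apply (rule abs_summable_summable)
    using sabs by (simp add: case_prod_unfold abs_mult abs_prod_list)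
  have hs: "((\<lambda>(k,xs). b k * prod_list (map b xs)) has_sum W * W^n) ({0<..} \<times> LL n)"
  proof (rule has_sum_SigmaI[where g="\<lambda>k. b k * W^n"])
    show "((\<lambda>y. case (x, y) of (k, xs) \<Rightarrow> b k * prod_list (map b xs)) has_sum b x * W ^ n) (LL n)" for x
      using has_sum_cmult_right[OF h1, of "b x"] by simp
    show "((\<lambda>k. b k * W ^ n) has_sum W * W ^ n) {0<..}"
      using has_sum_cmult_left[OF has_sum_infsum[OF bs]] by (simp add: W_def)
  qed (use ssig in auto)
  show ?case
    unfolding LL_Suc
    apply (subst has_sum_reindex[OF inj])
    using hs by (simp add: W_def o_def case_prod_unfold)
qed


lemma geom_has_sum:
  fixes z :: real
  assumes "\<bar>z\<bar> < 1"
  shows "((\<lambda>n. z^n) has_sum 1/(1-z)) UNIV"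
  by (rule norm_summable_imp_has_sum)
     (use assms in \<open>auto simp: geometric_sums summable_geometric power_abs\<close>)

lemma PL_has_sum:
  fixes b :: "nat \<Rightarrow> real"
  assumes bs: "(\<lambda>k. \<bar>b k\<bar>) summable_on {0<..}" and bl: "infsum (\<lambda>k. \<bar>b k\<bar>) {0<..} < 1"
  shows "((\<lambda>xs. (-1)^length xs * prod_list (map b xs)) has_sum 1/(1 + infsum b {0<..})) PL"
    and "(\<lambda>xs. \<bar>(-1)^length xs * prod_list (map b xs)\<bar>) summable_on PL"
proof -
  define W where "W = infsum b {0<..}"
  define W' where "W' = infsum (\<lambda>k. \<bar>b k\<bar>) {0<..}"
  have W'0: "0 \<le> W'" unfolding W'_def by (rule infsum_nonneg) auto
  have WW': "\<bar>W\<bar> \<le> W'" unfolding W_def W'_def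
    using norm_infsum_bound[of b "{0<..}"] bs by simp
  have W'1: "W' < 1" using bl W'_def by simp
  let ?h = "\<lambda>xs::nat list. (length xs, xs)"
  have inj: "inj_on ?h PL" by (auto simp: inj_on_def)
  have img: "?h ` PL = Sigma UNIV LL" by (auto simp: PL_def LL_def image_iff)
  have sabs: "(\<lambda>(n,xs). prod_list (map (\<lambda>k. \<bar>b k\<bar>) xs)) summable_on Sigma UNIV LL"
  proof (rule summable_on_SigmaI[where g="\<lambda>n. W'^n"])
    show "((\<lambda>y. case (x, y) of (n, xs) \<Rightarrow> prod_list (map (\<lambda>k. \<bar>b k\<bar>) xs)) has_sum W' ^ x) (LL x)" for x
      using LL_has_sum[of "\<lambda>k. \<bar>b k\<bar>" x] bs by (simp add: W'_def)
    show "(\<lambda>n. W' ^ n) summable_on UNIV"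
      using geom_has_sum[of W'] W'0 W'1 summable_on_def by auto
  qed (auto simp: prod_list_nonneg')
  have ssig: "(\<lambda>(n,xs). (-1)^n * prod_list (map b xs)) summable_on Sigma UNIV LL"
    apply (rule abs_summable_summable)
    using sabs by (simp add: case_prod_unfold abs_mult abs_prod_list)
  have hs: "((\<lambda>(n,xs). (-1)^n * prod_list (map b xs)) has_sum 1/(1 + W)) (Sigma UNIV LL)"
  proof (rule has_sum_SigmaI[where g="\<lambda>n. (-W)^n"])
    show "((\<lambda>y. case (x, y) of (n, xs) \<Rightarrow> (- 1) ^ n * prod_list (map b xs)) has_sum (- W) ^ x) (LL x)" for x
    proof -
      have e: "(-W)^x = (-1)^x * W^x" by (rule power_minus)
      show ?thesis
        using has_sum_cmult_right[OF LL_has_sum[OF bs, of x], of "(-1)^x"] unfolding e unfolding W_def by simp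
    qed
    show "((\<lambda>n. (- W) ^ n) has_sum 1 / (1 + W)) UNIV"
      using geom_has_sum[of "-W"] WW' W'1 by simp
  qed (use ssig in auto)
  show "((\<lambda>xs. (-1)^length xs * prod_list (map b xs)) has_sum 1/(1 + infsum b {0<..})) PL"
    using hs unfolding W_def img[symmetric] has_sum_reindex[OF inj] by (simp add: o_def)
  show "(\<lambda>xs. \<bar>(-1)^length xs * prod_list (map b xs)\<bar>) summable_on PL"
    using sabs unfolding img[symmetric] summable_on_reindex[OF inj] by (simp add: o_def abs_mult abs_prod_list)
qed

lemma idxA_img: "idxA = (\<lambda>(n,xs). n # xs) ` (UNIV \<times> PL)"
  by (auto simp: idxA_def PL_def image_iff neq_Nil_conv)

lemma idxA_has_sum:
  fixes a b :: "nat \<Rightarrow> real"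
  assumes bs: "(\<lambda>k. \<bar>b k\<bar>) summable_on {0<..}" and bl: "infsum (\<lambda>k. \<bar>b k\<bar>) {0<..} < 1"
    and as: "(\<lambda>n. \<bar>a n\<bar>) summable_on UNIV"
  shows "((\<lambda>\<nu>. a (hd \<nu>) * ((-1)^(length \<nu> - 1) * prod_list (map b (tl \<nu>))))
           has_sum infsum a UNIV / (1 + infsum b {0<..})) idxA"
    and "(\<lambda>\<nu>. \<bar>a (hd \<nu>) * ((-1)^(length \<nu> - 1) * prod_list (map b (tl \<nu>)))\<bar>) summable_on idxA"
proof -
  define c where "c = (\<lambda>xs. (-1)^length xs * prod_list (map b xs))"
  define C where "C = 1/(1 + infsum b {0<..})"
  have c1: "(c has_sum C) PL" using PL_has_sum(1)[OF bs bl] by (simp add: c_def C_def)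
  have c2: "(\<lambda>xs. \<bar>c xs\<bar>) summable_on PL" using PL_has_sum(2)[OF bs bl] by (simp add: c_def)
  let ?h = "\<lambda>(n,xs). (n::nat) # xs"
  have inj: "inj_on ?h (UNIV \<times> PL)" by (auto simp: inj_on_def)
  have sabs: "(\<lambda>(n,xs). \<bar>a n\<bar> * \<bar>c xs\<bar>) summable_on (UNIV \<times> PL)"
  proof (rule summable_on_SigmaI[where g="\<lambda>n. \<bar>a n\<bar> * infsum (\<lambda>xs. \<bar>c xs\<bar>) PL"])
    show "((\<lambda>y. case (x, y) of (n, xs) \<Rightarrow> \<bar>a n\<bar> * \<bar>c xs\<bar>) has_sum \<bar>a x\<bar> * infsum (\<lambda>xs. \<bar>c xs\<bar>) PL) PL" for x
      using has_sum_cmult_right[OF has_sum_infsum[OF c2], of "\<bar>a x\<bar>"] by simp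
    show "(\<lambda>n. \<bar>a n\<bar> * infsum (\<lambda>xs. \<bar>c xs\<bar>) PL) summable_on UNIV"
      using summable_on_cmult_left[OF as] by simp
  qed auto
  have ssig: "(\<lambda>(n,xs). a n * c xs) summable_on (UNIV \<times> PL)"
    apply (rule abs_summable_summable)
    using sabs by (simp add: case_prod_unfold abs_mult)
  have as': "a summable_on UNIV"
    using as abs_summable_summable by (metis (no_types, lifting) real_norm_def summable_on_cong)
  have hs: "((\<lambda>(n,xs). a n * c xs) has_sum infsum a UNIV * C) (UNIV \<times> PL)"
  proof (rule has_sum_SigmaI[where g="\<lambda>n. a n * C"])
    show "((\<lambda>y. case (x, y) of (n, xs) \<Rightarrow> a n * c xs) has_sum a x * C) PL" for x
      using has_sum_cmult_right[OF c1, of "a x"] by simp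
    show "((\<lambda>n. a n * C) has_sum infsum a UNIV * C) UNIV"
      using has_sum_cmult_left[OF has_sum_infsum[OF as']] by simp
  qed (use ssig in auto)
  show "((\<lambda>\<nu>. a (hd \<nu>) * ((-1)^(length \<nu> - 1) * prod_list (map b (tl \<nu>))))
           has_sum infsum a UNIV / (1 + infsum b {0<..})) idxA"
    unfolding idxA_img has_sum_reindex[OF inj]
    using hs by (simp add: o_def case_prod_unfold c_def C_def)
  show "(\<lambda>\<nu>. \<bar>a (hd \<nu>) * ((-1)^(length \<nu> - 1) * prod_list (map b (tl \<nu>)))\<bar>) summable_on idxA"
    unfolding idxA_img summable_on_reindex[OF inj]
    using sabs by (simp add: o_def case_prod_unfold c_def abs_mult)
qed

lemma uniform_limit_infsum:
  fixes f :: "'i \<Rightarrow> 'x \<Rightarrow> real"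
  assumes M: "M summable_on I" and bound: "\<And>\<nu> x. \<nu> \<in> I \<Longrightarrow> x \<in> S \<Longrightarrow> \<bar>f \<nu> x\<bar> \<le> M \<nu>"
  shows "uniform_limit S (\<lambda>F x. \<Sum>\<nu>\<in>F. f \<nu> x) (\<lambda>x. infsum (\<lambda>\<nu>. f \<nu> x) I) (finite_subsets_at_top I)"
  unfolding uniform_limit_iff
proof (intro allI impI)
  fix e :: real assume e: "e > 0"
  have "(sum M \<longlongrightarrow> infsum M I) (finite_subsets_at_top I)"
    using has_sum_infsum[OF M] unfolding has_sum_def .
  then have "\<forall>\<^sub>F Y in finite_subsets_at_top I. dist (sum M Y) (infsum M I) < e"
    using tendstoD e by blast
  then have "\<exists>X. finite X \<and> X \<subseteq> I \<and> (\<forall>Y. finite Y \<and> X \<subseteq> Y \<and> Y \<subseteq> I \<longrightarrow> dist (sum M Y) (infsum M I) < e)"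
    unfolding eventually_finite_subsets_at_top .
  then obtain X where X: "finite X" "X \<subseteq> I"
    and XP0: "\<forall>Y. finite Y \<and> X \<subseteq> Y \<and> Y \<subseteq> I \<longrightarrow> dist (sum M Y) (infsum M I) < e"
    by blast
  have XP: "\<And>Y. finite Y \<Longrightarrow> X \<subseteq> Y \<Longrightarrow> Y \<subseteq> I \<Longrightarrow> dist (sum M Y) (infsum M I) < e"
    using XP0 by blast
  show "\<forall>\<^sub>F F in finite_subsets_at_top I. \<forall>x\<in>S. dist (\<Sum>\<nu>\<in>F. f \<nu> x) (\<Sum>\<^sub>\<infinity>\<nu>\<in>I. f \<nu> x) < e"
    unfolding eventually_finite_subsets_at_top
  proof (intro exI conjI allI impI ballI)
    fix Y x assume Y: "finite Y \<and> X \<subseteq> Y \<and> Y \<subseteq> I" and x: "x \<in> S"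
    have fa: "(\<lambda>\<nu>. \<bar>f \<nu> x\<bar>) summable_on I"
      by (rule summable_on_comparison_test[OF M]) (use bound x in auto)
    have fs: "(\<lambda>\<nu>. f \<nu> x) summable_on I"
      by (rule abs_summable_summable) (use fa in simp)
    have fsY: "(\<lambda>\<nu>. f \<nu> x) summable_on Y" using Y by simp
    have eq: "infsum (\<lambda>\<nu>. f \<nu> x) I - (\<Sum>\<nu>\<in>Y. f \<nu> x) = infsum (\<lambda>\<nu>. f \<nu> x) (I - Y)"
      using infsum_Diff[OF fs fsY] Y by simp
    have fsD: "(\<lambda>\<nu>. norm (f \<nu> x)) summable_on (I - Y)"
      using summable_on_subset_banach[OF fa, of "I - Y"] by simp
    have "\<bar>infsum (\<lambda>\<nu>. f \<nu> x) (I - Y)\<bar> \<le> infsum (\<lambda>\<nu>. \<bar>f \<nu> x\<bar>) (I - Y)"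
      using norm_infsum_bound[OF fsD] by simp
    also have "\<dots> \<le> infsum M (I - Y)"
      apply (rule infsum_mono)
      using summable_on_subset_banach[OF fa, of "I - Y"] summable_on_subset_banach[OF M, of "I - Y"] bound x
      by auto
    also have "\<dots> = infsum M I - sum M Y"
      using infsum_Diff[OF M, of Y] Y by simp
    also have "\<dots> < e" using XP[of Y] Y by (simp add: dist_real_def)
    finally show "dist (\<Sum>\<nu>\<in>Y. f \<nu> x) (\<Sum>\<^sub>\<infinity>\<nu>\<in>I. f \<nu> x) < e"
      using eq by (simp add: dist_real_def abs_minus_commute)
  qed (use X in auto)
qed

lemma crit_partition:
  fixes F f w :: "real \<Rightarrow> real"
  assumes ab: "a \<le> b" and fi: "f integrable_on {a..b}" and wi: "w integrable_on {a..b}"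
    and N: "N > 0" and d: "(b - a) / real N < \<delta>"
    and loc: "\<And>x y. a \<le> x \<Longrightarrow> x \<le> y \<Longrightarrow> y \<le> b \<Longrightarrow> y - x < \<delta> \<Longrightarrow>
               \<bar>F y - F x - integral {x..y} f\<bar> \<le> e * (y - x + integral {x..y} w)"
  shows "\<bar>F b - F a - integral {a..b} f\<bar> \<le> e * (b - a + integral {a..b} w)"
proof -
  define p where "p i = a + real i * (b - a) / real N" for i
  have pmono: "p i \<le> p j" if "i \<le> j" for i j
    unfolding p_def using that ab N by (auto intro!: divide_right_mono mult_right_mono)
  have pa: "a \<le> p i" for i unfolding p_def using ab N by auto
  have pb: "p i \<le> b" if "i \<le> N" for i
  proof -
    have "real i * (b - a) \<le> real N * (b - a)" using that ab by (intro mult_right_mono) auto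
    then have "real i * (b - a) / real N \<le> b - a" using N by (simp add: pos_divide_le_eq mult.commute)
    then show ?thesis unfolding p_def by simp
  qed
  have pstep: "p (Suc i) - p i = (b - a) / real N" for i
    unfolding p_def by (simp add: add_divide_distrib[symmetric] algebra_simps)
  have "\<bar>F (p k) - F a - integral {a..p k} f\<bar> \<le> e * (p k - a + integral {a..p k} w)" if "k \<le> N" for k
    using that
  proof (induction k)
    case 0
    then show ?case by (simp add: p_def)
  next
    case (Suc k)
    have k: "k \<le> N" using Suc.prems by simp
    have sub: "{a..p (Suc k)} \<subseteq> {a..b}" using pb[OF Suc.prems] by auto
    have fi': "f integrable_on {a..p (Suc k)}" using integrable_subinterval_real[OF fi sub] .
    have wi': "w integrable_on {a..p (Suc k)}" using integrable_subinterval_real[OF wi sub] .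
    have le: "p k \<le> p (Suc k)" by (rule pmono) simp
    have cf: "integral {a..p k} f + integral {p k..p (Suc k)} f = integral {a..p (Suc k)} f"
      by (rule Henstock_Kurzweil_Integration.integral_combine[OF pa le fi'])
    have cw: "integral {a..p k} w + integral {p k..p (Suc k)} w = integral {a..p (Suc k)} w"
      by (rule Henstock_Kurzweil_Integration.integral_combine[OF pa le wi'])
    have l1: "\<bar>F (p (Suc k)) - F (p k) - integral {p k..p (Suc k)} f\<bar>
              \<le> e * (p (Suc k) - p k + integral {p k..p (Suc k)} w)"
      using loc[OF pa le pb[OF Suc.prems]] pstep d by simp
    have "\<bar>F (p (Suc k)) - F a - integral {a..p (Suc k)} f\<bar>
        = \<bar>(F (p k) - F a - integral {a..p k} f) + (F (p (Suc k)) - F (p k) - integral {p k..p (Suc k)} f)\<bar>"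
      using cf by (simp add: algebra_simps)
    also have "\<dots> \<le> \<bar>F (p k) - F a - integral {a..p k} f\<bar> + \<bar>F (p (Suc k)) - F (p k) - integral {p k..p (Suc k)} f\<bar>"
      by (rule abs_triangle_ineq)
    also have "\<dots> \<le> e * (p k - a + integral {a..p k} w) + e * (p (Suc k) - p k + integral {p k..p (Suc k)} w)"
      using Suc.IH[OF k] l1 by simp
    also have "\<dots> = e * (p (Suc k) - a + integral {a..p (Suc k)} w)"
      using cw[symmetric] by (simp add: algebra_simps)
    finally show ?case .
  qed
  from this[of N] show ?thesis using N by (simp add: p_def)
qed

lemma crit:
  fixes F f w :: "real \<Rightarrow> real"
  assumes ab: "a \<le> b" and fi: "f integrable_on {a..b}" and wi: "w integrable_on {a..b}"
    and w0: "\<And>x. x \<in> {a..b} \<Longrightarrow> 0 \<le> w x"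
    and loc: "\<And>e. e > 0 \<Longrightarrow> \<exists>\<delta>>0. \<forall>x y. a \<le> x \<longrightarrow> x \<le> y \<longrightarrow> y \<le> b \<longrightarrow> y - x < \<delta> \<longrightarrow>
               \<bar>F y - F x - integral {x..y} f\<bar> \<le> e * (y - x + integral {x..y} w)"
  shows "F b - F a = integral {a..b} f"
proof -
  define D where "D = \<bar>F b - F a - integral {a..b} f\<bar>"
  define K where "K = b - a + integral {a..b} w"
  have K0: "0 \<le> K" unfolding K_def using integral_nonneg[OF wi w0] ab by simp
  have bound: "D \<le> e * K" if e: "e > 0" for e
  proof -
    obtain \<delta> where \<delta>: "\<delta> > 0" and l: "\<forall>x y. a \<le> x \<longrightarrow> x \<le> y \<longrightarrow> y \<le> b \<longrightarrow> y - x < \<delta> \<longrightarrow>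
               \<bar>F y - F x - integral {x..y} f\<bar> \<le> e * (y - x + integral {x..y} w)"
      using loc[OF e] by blast
    obtain N :: nat where N: "(b - a) / \<delta> < real N" using reals_Archimedean2 by blast
    have "0 \<le> (b - a) / \<delta>" using ab \<delta> by simp
    then have "real N > 0" using N by linarith
    then have N0: "N > 0" by simp
    have "(b - a) / real N < \<delta>"
      using N N0 \<delta> by (simp add: field_simps)
    from crit_partition[OF ab fi wi N0 this] l show ?thesis unfolding D_def K_def by blast
  qed
  have "D = 0"
  proof (rule ccontr)
    assume "D \<noteq> 0"
    then have D0: "D > 0" unfolding D_def by simp
    have "D \<le> (D / (K + 1)) * K" using bound[of "D / (K+1)"] D0 K0 by simp
    also have "\<dots> < D" using D0 K0 by (simp add: field_simps)
    finally show False by simp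
  qed
  then show ?thesis unfolding D_def by simp
qed

lemma ai_cont_mult:
  fixes f g :: "real \<Rightarrow> real"
  assumes f: "f absolutely_integrable_on {a..b}" and g: "continuous_on {a..b} g"
  shows "(\<lambda>x. g x * f x) absolutely_integrable_on {a..b}"
proof (rule absolutely_integrable_bounded_measurable_product_real)
  show "g \<in> borel_measurable (lebesgue_on {a..b})"
    by (rule continuous_imp_measurable_on_sets_lebesgue[OF g]) simp
  show "{a..b} \<in> sets lebesgue" by simp
  show "bounded (g ` {a..b})"
    by (rule compact_imp_bounded[OF compact_continuous_image[OF g compact_Icc]])
qed (rule f)

lemma ai_int: "(f::real\<Rightarrow>real) absolutely_integrable_on S \<Longrightarrow> f integrable_on S"
  using set_lebesgue_integral_eq_integral(1) by blast

lemma ai_abs_int: "(f::real\<Rightarrow>real) absolutely_integrable_on S \<Longrightarrow> (\<lambda>x. \<bar>f x\<bar>) integrable_on S"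
proof -
  assume a: "f absolutely_integrable_on S"
  have "(\<lambda>x. norm (f x)) integrable_on S" using a unfolding absolutely_integrable_on_def by (rule conjunct2)
  then show ?thesis by simp
qed

lemma exp_quad:
  fixes z :: real assumes z: "\<bar>z\<bar> \<le> 1" shows "\<bar>exp z - 1 - z\<bar> \<le> z^2"
proof (cases "z \<ge> 0")
  case True
  then have a1: "exp z \<le> 1 + z + z^2" using exp_bound z by auto
  have a2: "1 + z \<le> exp z" by (rule exp_ge_add_one_self)
  show ?thesis unfolding abs_le_iff using a1 a2 zero_le_power2[of z] by linarith
next
  case False
  define w where "w = -z"
  have w: "w > 0" using False w_def by simp
  have p0: "1 - w + w^2 = (w - 1/2)^2 + 3/4" by (simp add: power2_eq_square algebra_simps)
  have p: "0 < 1 - w + w^2" unfolding p0 using zero_le_power2[of "w - 1/2"] by linarith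
  have "(1 - w + w^2) * (1 + w) \<le> (1 - w + w^2) * exp w"
    by (rule mult_left_mono[OF exp_ge_add_one_self]) (use p in simp)
  moreover have "(1 - w + w^2) * (1 + w) = 1 + w^3" by (simp add: power2_eq_square power3_eq_cube algebra_simps)
  moreover have "0 \<le> w^3" using w by simp
  ultimately have "1 \<le> (1 - w + w^2) * exp w" by linarith
  then have "exp (-w) \<le> 1 - w + w^2"
    by (simp add: exp_minus field_simps)
  then have a1: "exp z \<le> 1 + z + z^2" unfolding w_def by simp
  have a2: "1 + z \<le> exp z" by (rule exp_ge_add_one_self)
  show ?thesis unfolding abs_le_iff using a1 a2 zero_le_power2[of z] by linarith
qed

lemma ucont_get:
  fixes f :: "real \<Rightarrow> real"
  assumes "continuous_on {a..b} f" "e > 0"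
  shows "\<exists>d>0. \<forall>x\<in>{a..b}. \<forall>x'\<in>{a..b}. \<bar>x' - x\<bar> < d \<longrightarrow> \<bar>f x' - f x\<bar> < e"
  using compact_uniformly_continuous[OF assms(1) compact_Icc] assms(2)
  unfolding uniformly_continuous_on_def dist_real_def by blast

lemma E_local:
  fixes u :: "real \<Rightarrow> real"
  assumes ui: "u absolutely_integrable_on {0..1}" and e: "\<epsilon> > 0"
  defines "E \<equiv> \<lambda>x. exp (-(1/2) * integral {0..x} u)"
  shows "\<exists>\<delta>>0. \<forall>x y. 0 \<le> x \<longrightarrow> x \<le> y \<longrightarrow> y \<le> 1 \<longrightarrow> y - x < \<delta> \<longrightarrow>
     \<bar>E y - E x - integral {x..y} (\<lambda>s. -(1/2) * u s * E s)\<bar> \<le> \<epsilon> * integral {x..y} (\<lambda>s. \<bar>u s\<bar>)"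
proof -
  define U where "U = (\<lambda>x. integral {0..x} u)"
  have E_U: "E = (\<lambda>x. exp (-(1/2) * U x))" by (simp add: E_def U_def)
  have uint: "u integrable_on {0..1}" using ai_int[OF ui] .
  have auint: "(\<lambda>s. \<bar>u s\<bar>) integrable_on {0..1}" using ai_abs_int[OF ui] .
  have Ucont: "continuous_on {0..1} U" unfolding U_def by (rule indefinite_integral_continuous_1[OF uint])
  have Econt: "continuous_on {0..1} E" unfolding E_U by (intro continuous_intros Ucont)
  define N1 where "N1 = integral {0..1} (\<lambda>s. \<bar>u s\<bar>)"
  have Ubd: "\<bar>U x\<bar> \<le> N1" if "x \<in> {0..1}" for x
  proof -
    have "\<bar>U x\<bar> \<le> integral {0..x} (\<lambda>s. \<bar>u s\<bar>)" unfolding U_def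
      using integral_norm_bound_integral[of u "{0..x}" "\<lambda>s. \<bar>u s\<bar>"]
        integrable_subinterval_real[OF uint, of 0 x] integrable_subinterval_real[OF auint, of 0 x] that
      by auto
    also have "\<dots> \<le> N1" unfolding N1_def
      by (rule integral_subset_le) (use that integrable_subinterval_real[OF auint, of 0 x] auint in auto)
    finally show ?thesis .
  qed
  define C where "C = exp (N1/2)"
  have C0: "C > 0" unfolding C_def by simp
  have Ebd: "E x \<le> C" if "x \<in> {0..1}" for x
    unfolding E_U C_def using Ubd[OF that] by simp
  have Epos: "E x > 0" for x unfolding E_U by simp
  have Udiff: "U y - U x = integral {x..y} u" if "0 \<le> x" "x \<le> y" "y \<le> 1" for x y
    using Henstock_Kurzweil_Integration.integral_combine[OF that(1,2) integrable_subinterval_real[OF uint, of 0 y]] that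
    unfolding U_def by auto
  have m0: "min 2 (2*\<epsilon>/C) > 0" using e C0 by simp
  obtain d1 where d1: "d1 > 0" and d1P: "\<forall>x\<in>{0..1}. \<forall>x'\<in>{0..1}. \<bar>x' - x\<bar> < d1 \<longrightarrow> \<bar>U x' - U x\<bar> < min 2 (2*\<epsilon>/C)"
    using ucont_get[OF Ucont m0] by blast
  obtain d2 where d2: "d2 > 0" and d2P: "\<forall>x\<in>{0..1}. \<forall>x'\<in>{0..1}. \<bar>x' - x\<bar> < d2 \<longrightarrow> \<bar>E x' - E x\<bar> < \<epsilon>"
    using ucont_get[OF Econt e] by blast
  show ?thesis
  proof (intro exI[of _ "min d1 d2"] conjI allI impI)
    show "min d1 d2 > 0" using d1 d2 by simp
    fix x y assume x0: "0 \<le> x" and xy: "x \<le> y" and y1: "y \<le> 1" and yx: "y - x < min d1 d2"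
    define D where "D = integral {x..y} u"
    define I where "I = integral {x..y} (\<lambda>s. \<bar>u s\<bar>)"
    have sub: "{x..y} \<subseteq> {0..1}" using x0 y1 by auto
    have uxy: "u absolutely_integrable_on {x..y}" using absolutely_integrable_on_subinterval[OF ui sub] .
    have uixy: "u integrable_on {x..y}" using ai_int[OF uxy] .
    have auixy: "(\<lambda>s. \<bar>u s\<bar>) integrable_on {x..y}" using ai_abs_int[OF uxy] .
    have DI: "\<bar>D\<bar> \<le> I" unfolding D_def I_def using integral_norm_bound_integral[OF uixy auixy] by auto
    have DU: "D = U y - U x" using Udiff[OF x0 xy y1] D_def by simp
    have Dsmall: "\<bar>D\<bar> < min 2 (2*\<epsilon>/C)" using d1P x0 xy y1 yx unfolding DU by auto
    have Ey: "E y = E x * exp (-D/2)" unfolding E_U DU by (simp add: exp_add[symmetric] algebra_simps)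
    have Ecxy: "continuous_on {x..y} E" using continuous_on_subset[OF Econt sub] .
    have prod_int: "(\<lambda>s. (E s - E x) * u s) absolutely_integrable_on {x..y}"
      by (rule ai_cont_mult[OF uxy]) (intro continuous_intros Ecxy)
    have prod_int': "(\<lambda>s. (E s - E x) * u s) integrable_on {x..y}" using ai_int[OF prod_int] .
    have split: "integral {x..y} (\<lambda>s. -(1/2) * u s * E s) = -(1/2) * E x * D - (1/2) * integral {x..y} (\<lambda>s. (E s - E x) * u s)"
    proof -
      have "(\<lambda>s. -(1/2) * u s * E s) = (\<lambda>s. (-(1/2) * E x) * u s + (-(1/2)) * ((E s - E x) * u s))"
        by (auto simp: fun_eq_iff algebra_simps)
      then show ?thesis
        using integral_add[OF integrable_on_mult_right[OF uixy, of "-(1/2) * E x"] integrable_on_mult_right[OF prod_int', of "-(1/2)"]]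
        by (simp add: D_def)
    qed
    have t2: "\<bar>integral {x..y} (\<lambda>s. (E s - E x) * u s)\<bar> \<le> \<epsilon> * I"
    proof -
      have "norm (integral {x..y} (\<lambda>s. (E s - E x) * u s)) \<le> integral {x..y} (\<lambda>s. \<epsilon> * \<bar>u s\<bar>)"
      proof (rule integral_norm_bound_integral[OF prod_int' integrable_on_mult_right[OF auixy]])
        fix s assume s: "s \<in> {x..y}"
        have "\<bar>E s - E x\<bar> < \<epsilon>" using d2P s sub yx by auto
        then show "norm ((E s - E x) * u s) \<le> \<epsilon> * \<bar>u s\<bar>" by (simp add: abs_mult mult_right_mono)
      qed
      then have "\<bar>integral {x..y} (\<lambda>s. (E s - E x) * u s)\<bar> \<le> integral {x..y} (\<lambda>s. \<epsilon> * \<bar>u s\<bar>)" by simp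
      also have "\<dots> = \<epsilon> * I" unfolding I_def by simp
      finally show ?thesis .
    qed
    have t1: "\<bar>E x * (exp (-D/2) - 1 + D/2)\<bar> \<le> (\<epsilon>/2) * I"
    proof -
      have "\<bar>exp (-D/2) - 1 - (-D/2)\<bar> \<le> (-D/2)^2" by (rule exp_quad) (use Dsmall in auto)
      then have q: "\<bar>exp (-D/2) - 1 + D/2\<bar> \<le> \<bar>D\<bar> * \<bar>D\<bar> / 4" by (simp add: power2_eq_square)
      have "\<bar>E x * (exp (-D/2) - 1 + D/2)\<bar> = E x * \<bar>exp (-D/2) - 1 + D/2\<bar>"
        using Epos[of x] by (simp add: abs_mult)
      also have "\<dots> \<le> C * (\<bar>D\<bar> * \<bar>D\<bar> / 4)"
        using Ebd[of x] x0 xy y1 q Epos[of x] by (intro mult_mono) auto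
      also have "\<dots> = (C * \<bar>D\<bar> / 4) * \<bar>D\<bar>" by simp
      also have "\<dots> \<le> (\<epsilon>/2) * I"
      proof (rule mult_mono)
        have "C * \<bar>D\<bar> \<le> C * (2*\<epsilon>/C)" using Dsmall C0 by (intro mult_left_mono) auto
        then show "C * \<bar>D\<bar> / 4 \<le> \<epsilon> / 2" using C0 by simp
      qed (use DI e in auto)
      finally show ?thesis .
    qed
    have "E y - E x - integral {x..y} (\<lambda>s. -(1/2) * u s * E s)
          = E x * (exp (-D/2) - 1 + D/2) + (1/2) * integral {x..y} (\<lambda>s. (E s - E x) * u s)"
      unfolding split Ey by (simp add: algebra_simps)
    also have "\<bar>\<dots>\<bar> \<le> (\<epsilon>/2) * I + (1/2) * (\<epsilon> * I)"
    proof -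
      have "\<bar>(1/2) * integral {x..y} (\<lambda>s. (E s - E x) * u s)\<bar> = (1/2) * \<bar>integral {x..y} (\<lambda>s. (E s - E x) * u s)\<bar>"
        by (simp add: abs_mult)
      then show ?thesis using t1 t2 abs_triangle_ineq[of "E x * (exp (-D/2) - 1 + D/2)" "(1/2) * integral {x..y} (\<lambda>s. (E s - E x) * u s)"]
        by linarith
    qed
    finally show "\<bar>E y - E x - integral {x..y} (\<lambda>s. -(1/2) * u s * E s)\<bar> \<le> \<epsilon> * integral {x..y} (\<lambda>s. \<bar>u s\<bar>)"
      unfolding I_def by simp
  qed
qed

lemma ucm_int:
  fixes u g :: "real \<Rightarrow> real"
  assumes ui: "u absolutely_integrable_on {0..1}" and g: "continuous_on {0..1} g"
    and x: "0 \<le> x" and y: "y \<le> 1"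
  shows "(\<lambda>s. g s * u s) integrable_on {x..y}"
proof -
  have sub: "{x..y} \<subseteq> {0..1}" using x y by auto
  show ?thesis
    by (rule ai_int[OF ai_cont_mult[OF absolutely_integrable_on_subinterval[OF ui sub] continuous_on_subset[OF g sub]]])
qed

lemma E_cont:
  fixes u :: "real \<Rightarrow> real"
  assumes ui: "u absolutely_integrable_on {0..1}"
  shows "continuous_on {0..1} (\<lambda>x. exp (-(1/2) * integral {0..x} u))"
  by (intro continuous_intros indefinite_integral_continuous_1 ai_int ui)

lemma E_bound:
  fixes u :: "real \<Rightarrow> real"
  assumes ui: "u absolutely_integrable_on {0..1}"
  shows "\<exists>C>0. \<forall>x\<in>{0..1}. exp (-(1/2) * integral {0..x} u) \<le> C"
proof -
  have "compact ((\<lambda>x. exp (-(1/2) * integral {0..x} u)) ` {0..1})"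
    by (rule compact_continuous_image[OF E_cont[OF ui] compact_Icc])
  then obtain B where "\<forall>v\<in>(\<lambda>x. exp (-(1/2) * integral {0..x} u)) ` {0..1}. norm v \<le> B"
    using compact_imp_bounded bounded_iff by metis
  then have "\<forall>x\<in>{0..1}. exp (-(1/2) * integral {0..x} u) \<le> max B 1" by force
  then show ?thesis by (intro exI[of _ "max B 1"]) auto
qed

lemma sin_ftc:
  fixes c x y :: real
  assumes "x \<le> y"
  shows "sin (c * y) - sin (c * x) = integral {x..y} (\<lambda>s. c * cos (c * s))"
proof -
  have "((\<lambda>s. c * cos (c * s)) has_integral (sin (c * y) - sin (c * x))) {x..y}"
  proof (rule fundamental_theorem_of_calculus[OF assms])
    fix s assume "s \<in> {x..y}"
    have "((\<lambda>s. sin (c * s)) has_real_derivative (c * cos (c * s))) (at s within {x..y})"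
      by (auto intro!: derivative_eq_intros)
    then show "((\<lambda>s. sin (c * s)) has_vector_derivative (c * cos (c * s))) (at s within {x..y})"
      by (simp add: has_real_derivative_iff_has_vector_derivative)
  qed
  then show ?thesis by (rule integral_unique[symmetric])
qed

lemma E_sin_ibp:
  fixes u :: "real \<Rightarrow> real" and c :: real
  assumes ui: "u absolutely_integrable_on {0..1}"
  defines "E \<equiv> \<lambda>x. exp (-(1/2) * integral {0..x} u)"
  shows "E 1 * sin c = integral {0..1} (\<lambda>s. (-(1/2) * E s * sin (c * s)) * u s + E s * (c * cos (c * s)))"
proof -
  define S where "S = (\<lambda>s. sin (c * s))"
  define S' where "S' = (\<lambda>s. c * cos (c * s))"
  define f1 where "f1 = (\<lambda>s. (-(1/2) * E s * S s) * u s)"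
  define f2 where "f2 = (\<lambda>s. E s * S' s)"
  have Econt: "continuous_on {0..1} E" unfolding E_def by (rule E_cont[OF ui])
  obtain C where C0: "C > 0" and Cb: "\<And>x. x \<in> {0..1} \<Longrightarrow> E x \<le> C"
    using E_bound[OF ui] unfolding E_def by blast
  have Epos: "E x > 0" for x unfolding E_def by simp
  have Scont: "continuous_on {0..1} S" unfolding S_def by (intro continuous_intros)
  have S'cont: "continuous_on {0..1} S'" unfolding S'_def by (intro continuous_intros)
  have f1i: "f1 integrable_on {x..y}" if "0 \<le> x" "y \<le> 1" for x y
    unfolding f1_def by (rule ucm_int[OF ui _ that]) (intro continuous_intros Econt Scont)
  have f2i: "f2 integrable_on {x..y}" if "0 \<le> x" "y \<le> 1" for x y
  proof -
    have "continuous_on {x..y} f2" unfolding f2_def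
      using that by (intro continuous_intros continuous_on_subset[OF Econt] continuous_on_subset[OF S'cont]) auto
    then show ?thesis by (rule integrable_continuous_real)
  qed
  have uint: "u integrable_on {0..1}" using ai_int[OF ui] .
  have auint: "(\<lambda>s. \<bar>u s\<bar>) integrable_on {0..1}" using ai_abs_int[OF ui] .
  have main: "(\<lambda>x. E x * S x) 1 - (\<lambda>x. E x * S x) 0 = integral {0..1} (\<lambda>s. f1 s + f2 s)"
  proof (rule crit[where w="\<lambda>s. \<bar>u s\<bar>"])
    show "(\<lambda>s. f1 s + f2 s) integrable_on {0..1}" using integrable_add[OF f1i f2i] by simp
    show "(\<lambda>s. \<bar>u s\<bar>) integrable_on {0..1}" by (rule auint)
    fix e :: real assume e: "e > 0"
    have e1: "e / (\<bar>c\<bar> + 1) > 0" using e by simp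
    have e2: "e / (C + 1) > 0" using e C0 by simp
    have e3: "e / 2 > 0" using e by simp
    obtain d3 where d3: "d3 > 0" and d3P: "\<forall>x\<in>{0..1}. \<forall>x'\<in>{0..1}. \<bar>x' - x\<bar> < d3 \<longrightarrow> \<bar>E x' - E x\<bar> < e / (\<bar>c\<bar> + 1)"
      using ucont_get[OF Econt e1] by blast
    obtain d4 where d4: "d4 > 0" and d4P: "\<forall>x\<in>{0..1}. \<forall>x'\<in>{0..1}. \<bar>x' - x\<bar> < d4 \<longrightarrow> \<bar>S x' - S x\<bar> < e / (C + 1)"
      using ucont_get[OF Scont e2] by blast
    obtain d1 where d1: "d1 > 0" and d1P: "\<forall>x y. 0 \<le> x \<longrightarrow> x \<le> y \<longrightarrow> y \<le> 1 \<longrightarrow> y - x < d1 \<longrightarrow>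
        \<bar>E y - E x - integral {x..y} (\<lambda>s. -(1/2) * u s * E s)\<bar> \<le> (e/2) * integral {x..y} (\<lambda>s. \<bar>u s\<bar>)"
      using E_local[OF ui e3] unfolding E_def by blast
    show "\<exists>\<delta>>0. \<forall>x y. 0 \<le> x \<longrightarrow> x \<le> y \<longrightarrow> y \<le> 1 \<longrightarrow> y - x < \<delta> \<longrightarrow>
           \<bar>E y * S y - E x * S x - integral {x..y} (\<lambda>s. f1 s + f2 s)\<bar>
           \<le> e * (y - x + integral {x..y} (\<lambda>s. \<bar>u s\<bar>))"
    proof (intro exI[of _ "min d1 (min d3 d4)"] conjI allI impI)
      show "min d1 (min d3 d4) > 0" using d1 d3 d4 by simp
      fix x y assume x0: "0 \<le> x" and xy: "x \<le> y" and y1: "y \<le> 1" and yx: "y - x < min d1 (min d3 d4)"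
      define I where "I = integral {x..y} (\<lambda>s. \<bar>u s\<bar>)"
      have sub: "{x..y} \<subseteq> {0..1}" using x0 y1 by auto
      have auixy: "(\<lambda>s. \<bar>u s\<bar>) integrable_on {x..y}" using integrable_subinterval_real[OF auint sub] .
      have I0: "0 \<le> I" unfolding I_def by (rule integral_nonneg[OF auixy]) auto
      have g1i: "(\<lambda>s. (-(1/2) * E s) * u s) integrable_on {x..y}"
        by (rule ucm_int[OF ui _ x0 y1]) (intro continuous_intros Econt)
      have g2i: "(\<lambda>s. ((S s - S x) * (-(1/2) * E s)) * u s) integrable_on {x..y}"
        by (rule ucm_int[OF ui _ x0 y1]) (intro continuous_intros Econt Scont)
      have hi: "(\<lambda>s. (E y - E s) * S' s) integrable_on {x..y}"
      proof -
        have "continuous_on {x..y} (\<lambda>s. (E y - E s) * S' s)"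
          using sub by (intro continuous_intros continuous_on_subset[OF Econt] continuous_on_subset[OF S'cont]) auto
        then show ?thesis by (rule integrable_continuous_real)
      qed
      have Sxy: "S y - S x = integral {x..y} S'" unfolding S_def S'_def using sin_ftc[OF xy] .
      have S'i: "S' integrable_on {x..y}"
        unfolding S'_def by (intro integrable_continuous_real continuous_intros)
      have a_eq: "E y * (S y - S x) - integral {x..y} f2 = integral {x..y} (\<lambda>s. (E y - E s) * S' s)"
      proof -
        have "integral {x..y} (\<lambda>s. (E y - E s) * S' s) = integral {x..y} (\<lambda>s. E y * S' s - f2 s)"
          by (simp add: f2_def algebra_simps)
        also have "\<dots> = E y * integral {x..y} S' - integral {x..y} f2"
          using integral_diff[OF integrable_on_mult_right[OF S'i, of "E y"] f2i[OF x0 y1]] by simp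
        finally show ?thesis using Sxy by simp
      qed
      have a_bd: "\<bar>integral {x..y} (\<lambda>s. (E y - E s) * S' s)\<bar> \<le> e * (y - x)"
      proof -
        have "norm (integral {x..y} (\<lambda>s. (E y - E s) * S' s)) \<le> integral {x..y} (\<lambda>s. e)"
        proof (rule integral_norm_bound_integral[OF hi])
          show "(\<lambda>s. e) integrable_on {x..y}" by (intro integrable_continuous_real continuous_intros)
          fix s assume s: "s \<in> {x..y}"
          have "\<bar>E y - E s\<bar> < e / (\<bar>c\<bar> + 1)" using d3P s sub yx by auto
          moreover have "\<bar>S' s\<bar> \<le> \<bar>c\<bar>" unfolding S'_def by (simp add: abs_mult mult_left_le)
          ultimately have "\<bar>E y - E s\<bar> * \<bar>S' s\<bar> \<le> e / (\<bar>c\<bar> + 1) * \<bar>c\<bar>"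
            by (intro mult_mono) auto
          also have "\<dots> \<le> e" using e by (simp add: field_simps)
          finally show "norm ((E y - E s) * S' s) \<le> e" by (simp add: abs_mult)
        qed
        then show ?thesis using xy by (simp add: mult.commute)
      qed
      have f1_eq: "integral {x..y} f1 = S x * integral {x..y} (\<lambda>s. (-(1/2) * E s) * u s)
                     + integral {x..y} (\<lambda>s. ((S s - S x) * (-(1/2) * E s)) * u s)"
      proof -
        have "integral {x..y} f1 = integral {x..y} (\<lambda>s. S x * ((-(1/2) * E s) * u s) + ((S s - S x) * (-(1/2) * E s)) * u s)"
          by (rule integral_cong) (simp add: f1_def field_simps)
        also have "\<dots> = S x * integral {x..y} (\<lambda>s. (-(1/2) * E s) * u s)
                     + integral {x..y} (\<lambda>s. ((S s - S x) * (-(1/2) * E s)) * u s)"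
          using integral_add[OF integrable_on_mult_right[OF g1i, of "S x"] g2i] by simp
        finally show ?thesis .
      qed
      have b1: "\<bar>S x * (E y - E x - integral {x..y} (\<lambda>s. (-(1/2) * E s) * u s))\<bar> \<le> (e/2) * I"
      proof -
        have "integral {x..y} (\<lambda>s. (-(1/2) * E s) * u s) = integral {x..y} (\<lambda>s. -(1/2) * u s * E s)"
          by (rule integral_cong) (simp add: algebra_simps)
        then have q: "\<bar>E y - E x - integral {x..y} (\<lambda>s. (-(1/2) * E s) * u s)\<bar> \<le> (e/2) * I"
          using d1P x0 xy y1 yx unfolding I_def by auto
        have "\<bar>S x\<bar> \<le> 1" unfolding S_def by simp
        then have "\<bar>S x\<bar> * \<bar>E y - E x - integral {x..y} (\<lambda>s. (-(1/2) * E s) * u s)\<bar> \<le> 1 * ((e/2) * I)"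
          using q by (intro mult_mono) auto
        then show ?thesis by (simp add: abs_mult)
      qed
      have b2: "\<bar>integral {x..y} (\<lambda>s. ((S s - S x) * (-(1/2) * E s)) * u s)\<bar> \<le> (e/2) * I"
      proof -
        have "norm (integral {x..y} (\<lambda>s. ((S s - S x) * (-(1/2) * E s)) * u s)) \<le> integral {x..y} (\<lambda>s. (e/2) * \<bar>u s\<bar>)"
        proof (rule integral_norm_bound_integral[OF g2i integrable_on_mult_right[OF auixy]])
          fix s assume s: "s \<in> {x..y}"
          have s01: "s \<in> {0..1}" using s sub by auto
          have "\<bar>S s - S x\<bar> < e / (C + 1)" using d4P s sub yx by auto
          moreover have "\<bar>-(1/2) * E s\<bar> \<le> C / 2" using Cb[OF s01] Epos[of s] by simp
          ultimately have "\<bar>S s - S x\<bar> * \<bar>-(1/2) * E s\<bar> \<le> e / (C + 1) * (C / 2)"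
            by (intro mult_mono) auto
          also have "\<dots> \<le> e / 2" using e C0 by (simp add: field_simps)
          finally have "\<bar>S s - S x\<bar> * \<bar>-(1/2) * E s\<bar> \<le> e / 2" .
          then have "\<bar>S s - S x\<bar> * \<bar>-(1/2) * E s\<bar> * \<bar>u s\<bar> \<le> e / 2 * \<bar>u s\<bar>"
            by (rule mult_right_mono) simp
          then show "norm (((S s - S x) * (-(1/2) * E s)) * u s) \<le> (e/2) * \<bar>u s\<bar>"
            by (simp add: abs_mult)
        qed
        then show ?thesis unfolding I_def by simp
      qed
      have "E y * S y - E x * S x - integral {x..y} (\<lambda>s. f1 s + f2 s)
            = integral {x..y} (\<lambda>s. (E y - E s) * S' s)
              + S x * (E y - E x - integral {x..y} (\<lambda>s. (-(1/2) * E s) * u s))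
              - integral {x..y} (\<lambda>s. ((S s - S x) * (-(1/2) * E s)) * u s)"
      proof -
        have "integral {x..y} (\<lambda>s. f1 s + f2 s) = integral {x..y} f1 + integral {x..y} f2"
          using integral_add[OF f1i[OF x0 y1] f2i[OF x0 y1]] .
        then show ?thesis using a_eq f1_eq by (simp add: algebra_simps)
      qed
      also have "\<bar>\<dots>\<bar> \<le> e * (y - x) + (e/2) * I + (e/2) * I"
        using a_bd b1 b2 by linarith
      finally show "\<bar>E y * S y - E x * S x - integral {x..y} (\<lambda>s. f1 s + f2 s)\<bar>
           \<le> e * (y - x + integral {x..y} (\<lambda>s. \<bar>u s\<bar>))"
        unfolding I_def by (simp add: algebra_simps)
    qed
  qed auto
  then show ?thesis by (simp add: S_def f1_def f2_def S'_def)
qed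

lemma cos_int_integral:
  fixes k :: int
  shows "integral {0..1} (\<lambda>s. cos (of_int k * pi * s)) = (if k = 0 then 1 else 0)"
proof (cases "k = 0")
  case True then show ?thesis by simp
next
  case False
  have kp: "of_int k * pi \<noteq> 0" using False by simp
  have "((\<lambda>s. cos (of_int k * pi * s)) has_integral
        (sin (of_int k * pi * 1) / (of_int k * pi) - sin (of_int k * pi * 0) / (of_int k * pi))) {0..1}"
  proof (rule fundamental_theorem_of_calculus)
    fix s :: real assume "s \<in> {0..1}"
    have "((\<lambda>s. sin (of_int k * pi * s) / (of_int k * pi)) has_real_derivative
           (cos (of_int k * pi * s) * (of_int k * pi)) / (of_int k * pi)) (at s within {0..1})"
      by (auto intro!: derivative_eq_intros)
    then show "((\<lambda>s. sin (of_int k * pi * s) / (of_int k * pi)) has_vector_derivative cos (of_int k * pi * s)) (at s within {0..1})"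
      using kp by (simp add: has_real_derivative_iff_has_vector_derivative)
  qed simp
  moreover have "sin (of_int k * pi * 1) = 0" using sin_npi_int[of k] by (simp add: mult.commute)
  ultimately show ?thesis using False by (simp add: integral_unique)
qed

lemma sin_ortho:
  fixes n m :: nat
  assumes "n \<ge> 1" "m \<ge> 1"
  shows "integral {0..1} (\<lambda>s. (sqrt 2 * sin (real n * pi * s)) * (sqrt 2 * sin (real m * pi * s))) = (if n = m then 1 else 0)"
proof -
  have eq: "(sqrt 2 * sin (real n * pi * s)) * (sqrt 2 * sin (real m * pi * s))
        = cos (of_int (int n - int m) * pi * s) - cos (of_int (int n + int m) * pi * s)" for s
  proof -
    have "(sqrt 2 * sin (real n * pi * s)) * (sqrt 2 * sin (real m * pi * s)) = 2 * (sin (real n * pi * s) * sin (real m * pi * s))"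
      by simp
    also have "\<dots> = cos (real n * pi * s - real m * pi * s) - cos (real n * pi * s + real m * pi * s)"
      unfolding sin_times_sin by simp
    also have "real n * pi * s - real m * pi * s = of_int (int n - int m) * pi * s" by (simp add: algebra_simps)
    also have "real n * pi * s + real m * pi * s = of_int (int n + int m) * pi * s" by (simp add: algebra_simps)
    finally show ?thesis .
  qed
  have i1: "(\<lambda>s. cos (of_int (int n - int m) * pi * s)) integrable_on {0..1}"
    by (intro integrable_continuous_real continuous_intros)
  have i2: "(\<lambda>s. cos (of_int (int n + int m) * pi * s)) integrable_on {0..1}"
    by (intro integrable_continuous_real continuous_intros)
  have "integral {0..1} (\<lambda>s. (sqrt 2 * sin (real n * pi * s)) * (sqrt 2 * sin (real m * pi * s)))
      = integral {0..1} (\<lambda>s. cos (of_int (int n - int m) * pi * s)) - integral {0..1} (\<lambda>s. cos (of_int (int n + int m) * pi * s))"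
    unfolding eq by (rule integral_diff[OF i1 i2])
  also have "\<dots> = (if n = m then 1 else 0)"
    unfolding cos_int_integral using assms by auto
  finally show ?thesis .
qed


lemma bessel:
  fixes g :: "real \<Rightarrow> real"
  assumes ga: "g absolutely_integrable_on {0..1}" and g2: "(\<lambda>s. (g s)^2) integrable_on {0..1}"
  shows "(\<Sum>n\<in>{1..N}. (integral {0..1} (\<lambda>s. g s * (sqrt 2 * sin (real n * pi * s))))^2)
          \<le> integral {0..1} (\<lambda>s. (g s)^2)"
proof -
  define \<phi> where "\<phi> n s = sqrt 2 * sin (real n * pi * s)" for n s
  define \<beta> where "\<beta> n = integral {0..1} (\<lambda>s. g s * \<phi> n s)" for n
  define P where "P s = (\<Sum>n\<in>{1..N}. \<beta> n * \<phi> n s)" for s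
  have \<phi>c: "continuous_on {0..1} (\<phi> n)" for n unfolding \<phi>_def by (intro continuous_intros)
  have g\<phi>: "(\<lambda>s. g s * \<phi> n s) integrable_on {0..1}" for n
    using ucm_int[OF ga \<phi>c, of 0 1] by (simp add: mult.commute)
  have Pc: "continuous_on {0..1} P" unfolding P_def \<phi>_def by (intro continuous_intros)
  have PPi: "(\<lambda>s. P s * P s) integrable_on {0..1}"
    by (intro integrable_continuous_real continuous_intros Pc)
  have gPe: "g s * P s = (\<Sum>n\<in>{1..N}. \<beta> n * (g s * \<phi> n s))" for s
    unfolding P_def by (simp add: sum_distrib_left algebra_simps)
  have gPi: "(\<lambda>s. g s * P s) integrable_on {0..1}"
    unfolding gPe by (intro integrable_sum integrable_on_mult_right g\<phi>) simp
  have gPint: "integral {0..1} (\<lambda>s. g s * P s) = (\<Sum>n\<in>{1..N}. \<beta> n * \<beta> n)"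
    unfolding gPe
    by (subst integral_sum) (auto intro: integrable_on_mult_right g\<phi> simp: \<beta>_def)
  have PPe: "P s * P s = (\<Sum>n\<in>{1..N}. \<Sum>m\<in>{1..N}. \<beta> n * \<beta> m * (\<phi> n s * \<phi> m s))" for s
    unfolding P_def sum_product by (simp add: algebra_simps)
  have \<phi>\<phi>i: "(\<lambda>s. \<beta> n * \<beta> m * (\<phi> n s * \<phi> m s)) integrable_on {0..1}" for n m
    unfolding \<phi>_def by (intro integrable_continuous_real continuous_intros)
  have PPint: "integral {0..1} (\<lambda>s. P s * P s) = (\<Sum>n\<in>{1..N}. \<beta> n * \<beta> n)"
  proof -
    have "integral {0..1} (\<lambda>s. P s * P s)
        = (\<Sum>n\<in>{1..N}. \<Sum>m\<in>{1..N}. \<beta> n * \<beta> m * integral {0..1} (\<lambda>s. \<phi> n s * \<phi> m s))"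
      unfolding PPe
      apply (subst integral_sum)
        apply simp
       apply (intro integrable_sum \<phi>\<phi>i) apply simp
      apply (subst integral_sum)
        apply simp
       apply (rule \<phi>\<phi>i)
      apply simp
      done
    also have "\<dots> = (\<Sum>n\<in>{1..N}. \<Sum>m\<in>{1..N}. (if m = n then \<beta> n * \<beta> m else 0))"
    proof (rule sum.cong[OF refl], rule sum.cong[OF refl])
      fix n m assume "n \<in> {1..N}" "m \<in> {1..N}"
      then show "\<beta> n * \<beta> m * integral {0..1} (\<lambda>s. \<phi> n s * \<phi> m s) = (if m = n then \<beta> n * \<beta> m else 0)"
        using sin_ortho[of n m] unfolding \<phi>_def by auto
    qed
    also have "\<dots> = (\<Sum>n\<in>{1..N}. \<beta> n * \<beta> n)"
      by (simp add: sum.delta)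
    finally show ?thesis .
  qed
  have sq: "(g s - P s)^2 = ((g s)^2 - 2 * (g s * P s)) + P s * P s" for s
    by (simp add: power2_eq_square algebra_simps)
  have i1: "(\<lambda>s. (g s)^2 - 2 * (g s * P s)) integrable_on {0..1}"
    by (intro integrable_diff g2 integrable_on_mult_right gPi)
  have "0 \<le> integral {0..1} (\<lambda>s. (g s - P s)^2)"
  proof (rule integral_nonneg)
    show "(\<lambda>s. (g s - P s)^2) integrable_on {0..1}"
      unfolding sq by (intro integrable_add i1 PPi)
  qed simp
  also have "integral {0..1} (\<lambda>s. (g s - P s)^2)
      = integral {0..1} (\<lambda>s. (g s)^2) - 2 * (\<Sum>n\<in>{1..N}. \<beta> n * \<beta> n) + (\<Sum>n\<in>{1..N}. \<beta> n * \<beta> n)"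
    unfolding sq
    by (simp add: integral_add[OF i1 PPi] integral_diff[OF g2 integrable_on_mult_right[OF gPi]] gPint PPint)
  finally show ?thesis by (simp add: \<beta>_def \<phi>_def power2_eq_square)
qed

lemma lb2ai:
  fixes f :: "real \<Rightarrow> real"
  assumes "set_integrable lborel S f"
  shows "f absolutely_integrable_on S"
proof -
  have i: "integrable lborel (\<lambda>x. indicator S x *\<^sub>R f x)" using assms unfolding set_integrable_def .
  have m: "(\<lambda>x. indicator S x *\<^sub>R f x) \<in> borel_measurable lborel" using borel_measurable_integrable[OF i] .
  show ?thesis unfolding set_integrable_def using integrable_completion[OF m] i by simp
qed

lemma abs_le_1_sq: "\<bar>x::real\<bar> \<le> 1 + x^2"
proof -
  have "0 \<le> (\<bar>x\<bar> - 1/2)^2" by simp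
  moreover have "(\<bar>x\<bar> - 1/2)^2 = x^2 - \<bar>x\<bar> + 1/4"
    by (simp add: power2_eq_square algebra_simps)
  ultimately show ?thesis by linarith
qed

lemma L2_to_L1:
  fixes u :: "real \<Rightarrow> real"
  assumes meas: "u \<in> borel_measurable lborel"
    and L2: "set_integrable lborel {0..1} (\<lambda>s. (u s)^2)"
  shows "set_integrable lborel {0..1} u"
  unfolding set_integrable_def
proof (rule Bochner_Integration.integrable_bound)
  have "set_integrable lborel {0..1} (\<lambda>s. 1 + (u s)^2)"
    by (rule set_integral_add(1)[OF _ L2]) (intro borel_integrable_atLeastAtMost' continuous_intros)
  then show "integrable lborel (\<lambda>x. indicator {0..1} x *\<^sub>R (1 + (u x)^2))"
    unfolding set_integrable_def .
  show "(\<lambda>x. indicator {0..1} x *\<^sub>R u x) \<in> borel_measurable lborel"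
    using meas by measurable
  show "AE x in lborel. norm (indicator {0..1} x *\<^sub>R u x) \<le> norm (indicator {0..1} x *\<^sub>R (1 + (u x)^2))"
    using abs_le_1_sq by (auto simp: indicator_def)
qed

lemma LINT_eq_integral:
  fixes f :: "real \<Rightarrow> real"
  assumes "set_integrable lborel {0..1} f" "0 \<le> a" "b \<le> 1"
  shows "(LINT s:{a..b}|lborel. f s) = integral {a..b} f"
proof -
  have "set_integrable lborel {a..b} f"
    by (rule set_integrable_subset[OF assms(1)]) (use assms in auto)
  then show ?thesis by (rule set_borel_integral_eq_integral(2))
qed

lemma LINT_cont_eq_integral:
  fixes f :: "real \<Rightarrow> real"
  assumes "continuous_on {a..b} f"
  shows "(LINT s:{a..b}|lborel. f s) = integral {a..b} f"
  by (rule set_borel_integral_eq_integral(2)[OF borel_integrable_atLeastAtMost'[OF assms]])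

lemma H_eq:
  fixes u :: "real \<Rightarrow> real"
  assumes L1: "set_integrable lborel {0..1} u" and x: "x \<in> {0..1}"
  shows "ColeHopf_H u x = exp (-(1/2) * integral {0..x} u) / integral {0..1} (\<lambda>y. exp (-(1/2) * integral {0..y} u))"
proof -
  have ui: "u absolutely_integrable_on {0..1}" by (rule lb2ai[OF L1])
  have "(LINT y:{0..1}|lborel. exp (- (1/2) * (LINT s:{0..y}|lborel. u s)))
       = (LINT y:{0..1}|lborel. exp (- (1/2) * integral {0..y} u))"
    by (rule set_lebesgue_integral_cong) (auto simp: LINT_eq_integral[OF L1])
  also have "\<dots> = integral {0..1} (\<lambda>y. exp (-(1/2) * integral {0..y} u))"
    by (rule LINT_cont_eq_integral[OF E_cont[OF ui]])
  finally show ?thesis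
    unfolding ColeHopf_H_def using LINT_eq_integral[OF L1, of 0 x] x by simp
qed

lemma E_lower:
  fixes u :: "real \<Rightarrow> real"
  assumes ui: "u absolutely_integrable_on {0..1}"
  shows "\<exists>c>0. \<forall>x\<in>{0..1}. c \<le> exp (-(1/2) * integral {0..x} u)"
proof -
  obtain x0 where x0: "x0 \<in> {0..1}" and m: "\<forall>y\<in>{0..1}. exp (-(1/2) * integral {0..x0} u) \<le> exp (-(1/2) * integral {0..y} u)"
  proof -
    have ne: "{0..1::real} \<noteq> {}" by simp
    show ?thesis using continuous_attains_inf[OF compact_Icc ne E_cont[OF ui]] that by blast
  qed
  show ?thesis by (rule exI[of _ "exp (-(1/2) * integral {0..x0} u)"]) (use m in auto)
qed

lemma Z_pos:
  fixes u :: "real \<Rightarrow> real"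
  assumes ui: "u absolutely_integrable_on {0..1}"
  shows "integral {0..1} (\<lambda>x. exp (-(1/2) * integral {0..x} u)) > 0"
proof -
  obtain c where c: "c > 0" "\<forall>x\<in>{0..1}. c \<le> exp (-(1/2) * integral {0..x} u)"
    using E_lower[OF ui] by blast
  have "integral {0..1} (\<lambda>x::real. c) \<le> integral {0..1} (\<lambda>x. exp (-(1/2) * integral {0..x} u))"
    by (rule Henstock_Kurzweil_Integration.integral_le[OF _ integrable_continuous_real[OF E_cont[OF ui]]]) (use c in auto)
  then show ?thesis using c by simp
qed

lemma l_coef_eq:
  fixes u :: "real \<Rightarrow> real"
  assumes L1: "set_integrable lborel {0..1} u"
  defines "E \<equiv> \<lambda>x. exp (-(1/2) * integral {0..x} u)"
  defines "Z \<equiv> integral {0..1} E"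
  shows "l_coef n u = integral {0..1} (\<lambda>s. E s / Z * (sqrt 2 * cos (real n * pi * s)))"
proof -
  have ui: "u absolutely_integrable_on {0..1}" by (rule lb2ai[OF L1])
  have Ec: "continuous_on {0..1} E" unfolding E_def by (rule E_cont[OF ui])
  have Z0: "Z > 0" unfolding Z_def E_def by (rule Z_pos[OF ui])
  have Heq: "ColeHopf_H u x = E x / Z" if "x \<in> {0..1}" for x
    using H_eq[OF L1 that] unfolding E_def Z_def by simp
  have "l_coef n u = (LINT s:{0..1}|lborel. E s / Z * (sqrt 2 * cos (real n * pi * s)))"
    unfolding l_coef_def coef_def
    by (rule set_lebesgue_integral_cong) (use Z0 in \<open>auto simp: Heq e_cos_def\<close>)
  also have "\<dots> = integral {0..1} (\<lambda>s. E s / Z * (sqrt 2 * cos (real n * pi * s)))"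
    using Z0 by (intro LINT_cont_eq_integral continuous_intros Ec) auto
  finally show ?thesis .
qed


lemma l_coef_sin:
  fixes u :: "real \<Rightarrow> real"
  assumes L1: "set_integrable lborel {0..1} u" and n: "n \<ge> 1"
  defines "E \<equiv> \<lambda>x. exp (-(1/2) * integral {0..x} u)"
  defines "Z \<equiv> integral {0..1} E"
  shows "l_coef n u = (1 / (real n * pi)) * integral {0..1} (\<lambda>s. (E s / (2 * Z) * u s) * (sqrt 2 * sin (real n * pi * s)))"
proof -
  have ui: "u absolutely_integrable_on {0..1}" by (rule lb2ai[OF L1])
  have Ec: "continuous_on {0..1} E" unfolding E_def by (rule E_cont[OF ui])
  have Z0: "Z > 0" unfolding Z_def E_def by (rule Z_pos[OF ui])
  define c where "c = real n * pi"
  have c0: "c \<noteq> 0" unfolding c_def using n by simp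
  have ibp: "E 1 * sin c = integral {0..1} (\<lambda>s. (-(1/2) * E s * sin (c * s)) * u s + E s * (c * cos (c * s)))"
    unfolding E_def by (rule E_sin_ibp[OF ui])
  have sc: "sin c = 0" unfolding c_def by simp
  have Ai: "(\<lambda>s. (-(1/2) * E s * sin (c * s)) * u s) integrable_on {0..1}"
    by (rule ucm_int[OF ui _ order_refl order_refl]) (intro continuous_intros Ec)
  have Bi: "(\<lambda>s. E s * (c * cos (c * s))) integrable_on {0..1}"
    by (intro integrable_continuous_real continuous_intros Ec)
  define A where "A = integral {0..1} (\<lambda>s. (-(1/2) * E s * sin (c * s)) * u s)"
  define B where "B = integral {0..1} (\<lambda>s. E s * (c * cos (c * s)))"
  have AB: "A + B = 0" using ibp sc integral_add[OF Ai Bi] unfolding A_def B_def by simp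
  have "l_coef n u = integral {0..1} (\<lambda>s. E s / Z * (sqrt 2 * cos (real n * pi * s)))"
    unfolding E_def Z_def by (rule l_coef_eq[OF L1])
  also have "\<dots> = integral {0..1} (\<lambda>s. (sqrt 2 / (Z * c)) * (E s * (c * cos (c * s))))"
    by (rule integral_cong) (use c0 Z0 in \<open>simp add: c_def field_simps\<close>)
  also have "\<dots> = (sqrt 2 / (Z * c)) * B" unfolding B_def by (rule integral_mult_right)
  also have "\<dots> = (1 / c) * ((- sqrt 2 / Z) * A)" proof -
    have "B = - A" using AB by simp
    then show ?thesis using c0 Z0 by (simp add: field_simps)
  qed
  also have "(- sqrt 2 / Z) * A = integral {0..1} (\<lambda>s. (E s / (2 * Z) * u s) * (sqrt 2 * sin (c * s)))"
  proof -
    have "(- sqrt 2 / Z) * A = integral {0..1} (\<lambda>s. (- sqrt 2 / Z) * ((-(1/2) * E s * sin (c * s)) * u s))"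
      unfolding A_def by simp
    also have "\<dots> = integral {0..1} (\<lambda>s. (E s / (2 * Z) * u s) * (sqrt 2 * sin (c * s)))"
      by (rule integral_cong) (use Z0 in \<open>simp add: field_simps\<close>)
    finally show ?thesis .
  qed
  finally show ?thesis unfolding c_def by (simp add: mult.assoc)
qed

lemma inv_sq_sum_aux: "K \<ge> 1 \<Longrightarrow> (\<Sum>n\<in>{1..K}. 1 / (real n)^2) \<le> 2 - 1 / real K"
proof (induction K rule: nat_induct_at_least)
  case base then show ?case by simp
next
  case (Suc K)
  have K: "real K \<ge> 1" using Suc.hyps by simp
  have "1 / (real (Suc K))^2 \<le> 1 / (real K * real (Suc K))"
    by (rule divide_left_mono) (use K in \<open>auto simp: power2_eq_square intro!: mult_right_mono\<close>)
  also have "\<dots> = 1 / real K - 1 / real (Suc K)" using K by (simp add: field_simps)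
  finally have "1 / (real (Suc K))^2 \<le> 1 / real K - 1 / real (Suc K)" .
  then show ?case using Suc.IH by simp
qed

lemma inv_sq_sum: "(\<Sum>n\<in>{1..K}. 1 / (real n)^2) \<le> 2"
proof (cases "K \<ge> 1")
  case True
  have "0 \<le> 1 / real K" by simp
  then show ?thesis using inv_sq_sum_aux[OF True] by linarith
qed simp

lemma core:
  fixes u :: "real \<Rightarrow> real"
  assumes meas: "u \<in> borel_measurable lborel"
    and L2: "set_integrable lborel {0..1} (\<lambda>s. (u s)^2)"
    and small: "2 * exp (L2norm01 u) * L2norm01 u < 1"
  shows "summable (\<lambda>m. sqrt 2 * \<bar>l_coef (Suc m) u\<bar>) \<and> (\<Sum>m. sqrt 2 * \<bar>l_coef (Suc m) u\<bar>) \<le> 1/2"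
proof -
  have L1: "set_integrable lborel {0..1} u" by (rule L2_to_L1[OF meas L2])
  have ui: "u absolutely_integrable_on {0..1}" by (rule lb2ai[OF L1])
  have u2i: "(\<lambda>s. (u s)^2) absolutely_integrable_on {0..1}" by (rule lb2ai[OF L2])
  define Q where "Q = integral {0..1} (\<lambda>s. (u s)^2)"
  have Q0: "0 \<le> Q" unfolding Q_def by (rule integral_nonneg[OF ai_int[OF u2i]]) simp
  define L where "L = sqrt Q"
  have LL: "L2norm01 u = L" unfolding L2norm01_def L_def Q_def using LINT_eq_integral[OF L2, of 0 1] by simp
  have L0: "0 \<le> L" unfolding L_def using Q0 by simp
  have LQ: "L^2 = Q" unfolding L_def using Q0 by simp
  define E where "E = (\<lambda>x. exp (-(1/2) * integral {0..x} u))"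
  define Z where "Z = integral {0..1} E"
  have Ec: "continuous_on {0..1} E" unfolding E_def by (rule E_cont[OF ui])
  have Z0: "Z > 0" unfolding Z_def E_def by (rule Z_pos[OF ui])
  have uint: "u integrable_on {0..1}" using ai_int[OF ui] .
  have auint: "(\<lambda>s. \<bar>u s\<bar>) integrable_on {0..1}" using ai_abs_int[OF ui] .
  define N1 where "N1 = integral {0..1} (\<lambda>s. \<bar>u s\<bar>)"
  have Ubd: "\<bar>integral {0..x} u\<bar> \<le> N1" if "x \<in> {0..1}" for x
  proof -
    have "\<bar>integral {0..x} u\<bar> \<le> integral {0..x} (\<lambda>s. \<bar>u s\<bar>)"
      using integral_norm_bound_integral[of u "{0..x}" "\<lambda>s. \<bar>u s\<bar>"]
        integrable_subinterval_real[OF uint, of 0 x] integrable_subinterval_real[OF auint, of 0 x] that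
      by auto
    also have "\<dots> \<le> N1" unfolding N1_def
      by (rule integral_subset_le) (use that integrable_subinterval_real[OF auint, of 0 x] auint in auto)
    finally show ?thesis .
  qed
  have Eup: "E x \<le> exp (N1/2)" if "x \<in> {0..1}" for x
    unfolding E_def using Ubd[OF that] by simp
  have Elo: "exp (-(N1/2)) \<le> E x" if "x \<in> {0..1}" for x
    unfolding E_def using Ubd[OF that] by simp
  have Epos: "0 < E x" for x unfolding E_def by simp
  have Zlo: "exp (-(N1/2)) \<le> Z"
  proof -
    have "integral {0..1} (\<lambda>x::real. exp (-(N1/2))) \<le> Z"
      unfolding Z_def
      by (rule Henstock_Kurzweil_Integration.integral_le[OF _ integrable_continuous_real[OF Ec]]) (use Elo in auto)
    then show ?thesis by simp
  qed
  have Hb: "E x / Z \<le> exp N1" if "x \<in> {0..1}" for x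
  proof -
    have "E x / Z \<le> exp (N1/2) / exp (-(N1/2))"
      using Eup[OF that] Zlo Z0 Epos[of x] by (intro frac_le) auto
    also have "\<dots> = exp N1" by (simp add: exp_minus[symmetric] exp_add[symmetric] flip: exp_diff)
    finally show ?thesis .
  qed
  define \<gamma> where "\<gamma> s = E s / (2 * Z) * u s" for s
  have gc: "continuous_on {0..1} (\<lambda>s. E s / (2 * Z))" using Z0 by (intro continuous_intros Ec) auto
  have \<gamma>i: "\<gamma> absolutely_integrable_on {0..1}"
    unfolding \<gamma>_def by (rule ai_cont_mult[OF ui gc])
  have \<gamma>2e: "(\<gamma> s)^2 = (E s / (2 * Z))^2 * (u s)^2" for s unfolding \<gamma>_def by (rule power_mult_distrib)
  have g2c: "continuous_on {0..1} (\<lambda>s. (E s / (2 * Z))^2)" by (intro continuous_intros gc)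
  have \<gamma>2i: "(\<lambda>s. (\<gamma> s)^2) integrable_on {0..1}"
    unfolding \<gamma>2e by (rule ai_int[OF ai_cont_mult[OF u2i g2c]])
  have \<gamma>2b: "integral {0..1} (\<lambda>s. (\<gamma> s)^2) \<le> (exp N1 / 2)^2 * Q"
  proof -
    have "integral {0..1} (\<lambda>s. (\<gamma> s)^2) \<le> integral {0..1} (\<lambda>s. (exp N1 / 2)^2 * (u s)^2)"
    proof (rule Henstock_Kurzweil_Integration.integral_le[OF \<gamma>2i integrable_on_mult_right[OF ai_int[OF u2i]]])
      fix s :: real assume s: "s \<in> {0..1}"
      have a: "0 \<le> E s / (2 * Z)" using Epos[of s] Z0 by simp
      have b: "E s / (2 * Z) \<le> exp N1 / 2" using Hb[OF s] Z0 by (simp add: field_simps)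
      have "(E s / (2 * Z))^2 \<le> (exp N1 / 2)^2" by (rule power_mono[OF b a])
      then show "(\<gamma> s)^2 \<le> (exp N1 / 2)^2 * (u s)^2" unfolding \<gamma>2e by (rule mult_right_mono) simp
    qed
    also have "\<dots> = (exp N1 / 2)^2 * Q" unfolding Q_def by simp
    finally show ?thesis .
  qed
  have num: "(exp N1 / 2)^2 * Q \<le> 1/16"
  proof (cases "Q = 0")
    case True then show ?thesis by simp
  next
    case False
    then have Lp: "L > 0" using L0 LQ by (cases "L = 0") auto
    have "N1 \<le> integral {0..1} (\<lambda>s. ((u s)^2 / L + L) / 2)"
      unfolding N1_def
    proof (rule Henstock_Kurzweil_Integration.integral_le[OF auint])
      show "(\<lambda>s. ((u s)^2 / L + L) / 2) integrable_on {0..1}"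
        by (intro integrable_on_divide integrable_add integrable_continuous_real continuous_intros ai_int[OF u2i])
      fix s :: real
      have "0 \<le> (\<bar>u s\<bar> - L)^2" by simp
      then have "2 * L * \<bar>u s\<bar> \<le> (u s)^2 + L^2" by (simp add: power2_eq_square algebra_simps)
      then show "\<bar>u s\<bar> \<le> ((u s)^2 / L + L) / 2" using Lp by (simp add: field_simps power2_eq_square)
    qed
    also have "integral {0..1} (\<lambda>s. ((u s)^2 / L + L) / 2) = (Q / L + L) / 2"
    proof -
      have "integral {0..1} (\<lambda>s. ((u s)^2 / L + L) / 2) = integral {0..1} (\<lambda>s. (1 / (2 * L)) * (u s)^2 + L / 2)"
        by (rule integral_cong) (use Lp in \<open>simp add: field_simps\<close>)
      also have "\<dots> = (1 / (2 * L)) * Q + L / 2"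
        using integral_add[OF integrable_on_mult_right[OF ai_int[OF u2i], of "1 / (2 * L)"]
            integrable_continuous_real[OF continuous_on_const[of "{0..1}" "L/2"]]]
        by (simp add: Q_def)
      also have "\<dots> = (Q / L + L) / 2" by (simp add: field_simps)
      finally show ?thesis .
    qed
    also have "\<dots> = L" using LQ Lp by (simp add: power2_eq_square field_simps)
    finally have N1L: "N1 \<le> L" .
    have sm: "exp L * L < 1/2" using small LL by simp
    have "(exp N1 / 2)^2 * Q \<le> (exp L / 2)^2 * L^2"
      using N1L LQ Q0 by (intro mult_mono power_mono) auto
    also have "\<dots> = (exp L * L)^2 / 4" by (simp add: power2_eq_square)
    also have "\<dots> \<le> (1/2)^2 / 4"
      using sm L0 by (intro divide_right_mono power_mono) auto
    also have "(1/2::real)^2 / 4 = 1/16" by (simp add: power2_eq_square)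
    finally show ?thesis .
  qed
  define \<beta> where "\<beta> n = integral {0..1} (\<lambda>s. \<gamma> s * (sqrt 2 * sin (real n * pi * s)))" for n
  have bes: "(\<Sum>n\<in>{1..K}. (\<beta> n)^2) \<le> 1/16" for K
    using bessel[OF \<gamma>i \<gamma>2i, of K] \<gamma>2b num unfolding \<beta>_def by linarith
  have lrep: "l_coef n u = (1 / (real n * pi)) * \<beta> n" if "n \<ge> 1" for n
    using l_coef_sin[OF L1 that] unfolding \<beta>_def \<gamma>_def E_def Z_def .
  have tb: "sqrt 2 * \<bar>l_coef n u\<bar> \<le> ((\<beta> n)^2 + 2 / (real n * pi)^2) / 2" if n: "n \<ge> 1" for n
  proof -
    define b where "b = sqrt 2 / (real n * pi)"
    have "sqrt 2 * \<bar>l_coef n u\<bar> = \<bar>\<beta> n\<bar> * b"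
      unfolding lrep[OF n] b_def using n by (simp add: abs_mult field_simps)
    also have "\<dots> \<le> ((\<beta> n)^2 + b^2) / 2"
    proof -
      have "0 \<le> (\<bar>\<beta> n\<bar> - b)^2" by simp
      then show ?thesis by (simp add: power2_eq_square algebra_simps)
    qed
    also have "b^2 = 2 / (real n * pi)^2" unfolding b_def by (simp add: power_divide)
    finally show ?thesis .
  qed
  have psum: "(\<Sum>m<K. sqrt 2 * \<bar>l_coef (Suc m) u\<bar>) \<le> 1/2" for K
  proof -
    have "(\<Sum>m<K. sqrt 2 * \<bar>l_coef (Suc m) u\<bar>) = (\<Sum>n\<in>{1..K}. sqrt 2 * \<bar>l_coef n u\<bar>)"
      using sum.atLeast1_atMost_eq[of "\<lambda>n. sqrt 2 * \<bar>l_coef n u\<bar>" K] by simp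
    also have "\<dots> \<le> (\<Sum>n\<in>{1..K}. ((\<beta> n)^2 + 2 / (real n * pi)^2) / 2)"
      by (rule sum_mono) (use tb in auto)
    also have "\<dots> = ((\<Sum>n\<in>{1..K}. (\<beta> n)^2) + (2 / pi^2) * (\<Sum>n\<in>{1..K}. 1 / (real n)^2)) / 2"
    proof -
      have e1: "2 / (real n * pi)^2 = (2 / pi^2) * (1 / (real n)^2)" for n
        by (simp add: power_mult_distrib)
      have "(\<Sum>n\<in>{1..K}. ((\<beta> n)^2 + 2 / (real n * pi)^2) / 2)
          = ((\<Sum>n\<in>{1..K}. (\<beta> n)^2) + (\<Sum>n\<in>{1..K}. 2 / (real n * pi)^2)) / 2"
        by (simp add: sum_divide_distrib[symmetric] sum.distrib)
      also have "(\<Sum>n\<in>{1..K}. 2 / (real n * pi)^2) = (2 / pi^2) * (\<Sum>n\<in>{1..K}. 1 / (real n)^2)"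
        unfolding e1 by (rule sum_distrib_left[symmetric])
      finally show ?thesis .
    qed
    also have "\<dots> \<le> (1/16 + (2 / pi^2) * 2) / 2"
      using bes[of K] inv_sq_sum[of K] by (intro divide_right_mono add_mono mult_left_mono) auto
    also have "\<dots> \<le> 1/2"
    proof -
      have "(3::real) * 3 \<le> pi * pi" using pi_gt3 by (intro mult_mono) auto
      then have "9 \<le> pi^2" by (simp add: power2_eq_square)
      then have "2 / pi^2 \<le> 2 / 9" by (intro divide_left_mono) auto
      then show ?thesis by simp
    qed
    finally show ?thesis .
  qed
  have sm: "summable (\<lambda>m. sqrt 2 * \<bar>l_coef (Suc m) u\<bar>)"
    by (rule summableI_nonneg_bounded[OF _ psum]) simp
  show ?thesis using sm suminf_le_const[OF sm psum] by simp
qed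

lemma prod_list_mult: "prod_list (map f xs) * prod_list (map g xs) = prod_list (map (\<lambda>k. f k * g k) xs)"
  for f g :: "nat \<Rightarrow> real"
  by (induction xs) (auto simp: algebra_simps)

lemma exp_lam_list:
  "exp (-(pi^2 * sum_list (map (\<lambda>k. (real k)^2) xs)) * t) = prod_list (map (\<lambda>k. exp (-((real k)^2 * pi^2 * t))) xs)"
proof (induction xs)
  case Nil then show ?case by simp
next
  case (Cons k xs)
  have "exp (-(pi^2 * sum_list (map (\<lambda>k. (real k)^2) (k # xs))) * t)
      = exp (-((real k)^2 * pi^2 * t)) * exp (-(pi^2 * sum_list (map (\<lambda>k. (real k)^2) xs)) * t)"
    by (simp add: exp_add[symmetric] algebra_simps)
  then show ?case using Cons by simp
qed

lemma sqrt2_pow_list: "sqrt 2 ^ length xs = prod_list (map (\<lambda>k::nat. sqrt 2) xs)"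
  by (induction xs) auto

lemma powr_split: "2 powr ((real m + 3) / 2) = 2 powr (3/2) * sqrt 2 ^ m"
proof -
  have "2 powr ((real m + 3) / 2) = 2 powr (3/2) * 2 powr (real m / 2)"
    by (simp add: powr_add[symmetric] add_divide_distrib add.commute)
  also have "2 powr (real m / 2) = (2 powr (1/2)) powr real m"
    by (simp add: powr_powr)
  also have "\<dots> = sqrt 2 ^ m"
    by (simp add: powr_half_sqrt powr_realpow)
  finally show ?thesis .
qed

lemma series_term_form:
  "series_term t u0 (n # xs) x =
     (2 powr (3/2) * real n * pi * sin (real n * pi * x) * exp (-((real n)^2 * pi^2 * t)) * l_coef n u0)
     * ((-1)^length xs * prod_list (map (\<lambda>k. sqrt 2 * exp (-((real k)^2 * pi^2 * t)) * l_coef k u0 * cos (real k * pi * x)) xs))"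
proof -
  define P where "P = prod_list (map (\<lambda>k::nat. sqrt 2) xs)"
  define Q where "Q = prod_list (map (\<lambda>k. exp (-((real k)^2 * pi^2 * t))) xs)"
  define R where "R = prod_list (map (\<lambda>k. l_coef k u0) xs)"
  define C where "C = prod_list (map (\<lambda>k. cos (real k * pi * x)) xs)"
  have e1: "exp (lam (n # xs) * t) = exp (-((real n)^2 * pi^2 * t)) * Q"
  proof -
    have "exp (lam (n # xs) * t) = exp (-((real n)^2 * pi^2 * t)) * exp (-(pi^2 * sum_list (map (\<lambda>k. (real k)^2) xs)) * t)"
      unfolding lam_def by (simp add: exp_add[symmetric] algebra_simps)
    then show ?thesis unfolding Q_def exp_lam_list .
  qed
  have e2: "phi (n # xs) u0 = l_coef n u0 * R" unfolding phi_def R_def by simp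
  have e3: "a_fun (n # xs) x = (-1)^length xs * (2 powr (3/2) * P) * real n * pi * sin (real n * pi * x) * C"
    unfolding a_fun_def P_def C_def using powr_split[of "length xs"] sqrt2_pow_list[of xs] by simp
  have e4: "prod_list (map (\<lambda>k. sqrt 2 * exp (-((real k)^2 * pi^2 * t)) * l_coef k u0 * cos (real k * pi * x)) xs)
       = P * Q * R * C"
    unfolding P_def Q_def R_def C_def prod_list_mult by simp
  show ?thesis unfolding series_term_def e1 e2 e3 e4 by (simp add: mult_ac)
qed

lemma powr_3_2: "2 powr (3/2) = 2 * sqrt (2::real)"
proof -
  have "2 powr (3/2) = 2 powr (1 + 1/2::real)" by simp
  also have "\<dots> = 2 powr 1 * 2 powr (1/2::real)" by (rule powr_add)
  also have "\<dots> = 2 * sqrt 2" by (simp add: powr_half_sqrt)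
  finally show ?thesis .
qed

lemma n_exp_bound:
  fixes t :: real assumes t: "t > 0"
  shows "real n * exp (-((real n)^2 * pi^2 * t)) \<le> (2 / (pi^2 * t)) * exp (-(pi^2 * t / 2)) ^ n"
proof -
  define a where "a = pi^2 * t / 2"
  have a: "a > 0" unfolding a_def using t by simp
  have "1 + a * real n \<le> exp (a * real n)" by (rule exp_ge_add_one_self)
  then have "a * real n \<le> exp (a * real n)" by linarith
  then have n1: "real n \<le> exp (a * real n) / a" using a by (simp add: pos_le_divide_eq mult.commute)
  have "real n \<le> (real n)^2" by (cases n) (auto simp: power2_eq_square)
  then have "-((real n)^2 * pi^2 * t) \<le> -(2 * a * real n)" unfolding a_def using t
    by (simp add: mult_right_mono mult.commute mult.left_commute)
  then have n2: "exp (-((real n)^2 * pi^2 * t)) \<le> exp (-(2 * a * real n))" by simp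
  have "real n * exp (-((real n)^2 * pi^2 * t)) \<le> (exp (a * real n) / a) * exp (-(2 * a * real n))"
    using n1 n2 by (intro mult_mono) auto
  also have "\<dots> = (1 / a) * (exp (a * real n) * exp (-(2 * a * real n)))" by simp
  also have "exp (a * real n) * exp (-(2 * a * real n)) = exp (- a * real n)"
    by (subst exp_add[symmetric]) (simp add: algebra_simps)
  also have "exp (- a * real n) = exp (-a) ^ n" by (simp add: exp_of_nat_mult[symmetric] mult.commute)
  finally show ?thesis unfolding a_def by simp
qed

lemma summable_n_exp:
  fixes t :: real assumes t: "t > 0"
  shows "summable (\<lambda>n. real n * exp (-((real n)^2 * pi^2 * t)))"
proof (rule summable_comparison_test[OF _ summable_mult[OF summable_geometric]])
  show "\<exists>N. \<forall>n\<ge>N. norm (real n * exp (-((real n)^2 * pi^2 * t))) \<le> (2 / (pi^2 * t)) * exp (-(pi^2 * t / 2)) ^ n"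
    using n_exp_bound[OF t] by auto
  show "norm (exp (-(pi^2 * t / 2))) < 1" using t by simp
qed

lemma burgers_eq:
  fixes u0 :: "real \<Rightarrow> real" and t :: real
  assumes t: "t > 0" and lb: "\<And>m. \<bar>l_coef (Suc m) u0\<bar> \<le> 1"
    and S: "summable (\<lambda>m. sqrt 2 * \<bar>l_coef (Suc m) u0\<bar>)"
  shows "burgers_flow t u0 x =
    (\<Sum>m. 2 powr (3/2) * real (Suc m) * pi * sin (real (Suc m) * pi * x) * exp (-((real (Suc m))^2 * pi^2 * t)) * l_coef (Suc m) u0)
    / (1 + (\<Sum>m. sqrt 2 * exp (-((real (Suc m))^2 * pi^2 * t)) * l_coef (Suc m) u0 * cos (real (Suc m) * pi * x)))"
proof -
  define l where "l m = l_coef (Suc m) u0" for m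
  define ex where "ex m = exp (-((real (Suc m))^2 * pi^2 * t))" for m
  define fser where "fser m y = ex m * l m * e_cos (Suc m) y" for m y
  define fder where "fder m y = ex m * l m * (sqrt 2 * (- sin (real (Suc m) * pi * y) * (real (Suc m) * pi)))" for m y
  define M where "M m = sqrt 2 * pi * (real (Suc m) * ex m)" for m
  have ex0: "0 < ex m" "ex m \<le> 1" for m unfolding ex_def using t by auto
  have hf: "heat_flow t (ColeHopf_H u0) = (\<lambda>y. 1 + (\<Sum>m. fser m y))"
    unfolding heat_flow_def fser_def ex_def l_def l_coef_def by (auto simp: fun_eq_iff)
  have sM: "summable M"
  proof -
    have "summable (\<lambda>m. real (Suc m) * exp (-((real (Suc m))^2 * pi^2 * t)))"
      by (rule iffD2[OF summable_Suc_iff[of "\<lambda>n. real n * exp (-((real n)^2 * pi^2 * t))"] summable_n_exp[OF t]])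
    then show ?thesis unfolding M_def ex_def by (intro summable_mult)
  qed
  have fderM: "norm (fder m y) \<le> M m" for m y
  proof -
    have "\<bar>fder m y\<bar> = ex m * \<bar>l m\<bar> * (sqrt 2 * \<bar>sin (real (Suc m) * pi * y)\<bar> * (real (Suc m) * pi))"
      unfolding fder_def using ex0[of m] by (simp add: abs_mult)
    also have "\<dots> \<le> ex m * 1 * (sqrt 2 * 1 * (real (Suc m) * pi))"
      using ex0[of m] lb[of m] unfolding l_def
      by (intro mult_mono) auto
    also have "\<dots> = M m" unfolding M_def by simp
    finally show ?thesis by simp
  qed
  have deriv_ok: "(fser n has_field_derivative fder n y) (at y within UNIV)" for n y
    unfolding fser_def fder_def e_cos_def
    by (auto intro!: derivative_eq_intros simp: algebra_simps)
  have uc: "uniformly_convergent_on UNIV (\<lambda>n y. \<Sum>i<n. fder i y)"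
    by (rule Weierstrass_m_test'[OF fderM sM])
  have s0: "summable (\<lambda>n. fser n 0)"
  proof (rule summable_comparison_test[OF _ S])
    have "norm (fser n 0) \<le> sqrt 2 * \<bar>l_coef (Suc n) u0\<bar>" for n
    proof -
      have "norm (fser n 0) = ex n * (sqrt 2 * \<bar>l_coef (Suc n) u0\<bar>)"
        unfolding fser_def e_cos_def l_def using ex0[of n] by (simp add: abs_mult)
      also have "\<dots> \<le> 1 * (sqrt 2 * \<bar>l_coef (Suc n) u0\<bar>)"
        using ex0[of n] by (intro mult_right_mono) auto
      finally show ?thesis by simp
    qed
    then show "\<exists>N. \<forall>n\<ge>N. norm (fser n 0) \<le> sqrt 2 * \<bar>l_coef (Suc n) u0\<bar>" by blast
  qed
  have D: "((\<lambda>y. \<Sum>n. fser n y) has_field_derivative (\<Sum>n. fder n x)) (at x)"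
    using has_field_derivative_series'(2)[OF convex_UNIV deriv_ok uc _ s0, of x] by simp
  have sx: "summable (\<lambda>n. fser n x)"
    using has_field_derivative_series'(1)[OF convex_UNIV deriv_ok uc _ s0, of x] by simp
  have D2: "((\<lambda>y. 1 + (\<Sum>n. fser n y)) has_field_derivative (\<Sum>n. fder n x)) (at x)"
    using DERIV_add[OF DERIV_const D] by simp
  have dv: "deriv (heat_flow t (ColeHopf_H u0)) x = (\<Sum>n. fder n x)"
    unfolding hf by (rule DERIV_imp_deriv[OF D2])
  have sd: "summable (\<lambda>n. fder n x)"
    by (rule summable_comparison_test[OF _ sM]) (use fderM in auto)
  have num: "-2 * (\<Sum>n. fder n x) = (\<Sum>m. 2 powr (3/2) * real (Suc m) * pi * sin (real (Suc m) * pi * x) * exp (-((real (Suc m))^2 * pi^2 * t)) * l_coef (Suc m) u0)"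
  proof -
    have "-2 * (\<Sum>n. fder n x) = (\<Sum>n. -2 * fder n x)" using suminf_mult[OF sd, of "-2"] by (simp only:)
    also have "\<dots> = (\<Sum>m. 2 powr (3/2) * real (Suc m) * pi * sin (real (Suc m) * pi * x) * exp (-((real (Suc m))^2 * pi^2 * t)) * l_coef (Suc m) u0)"
      unfolding fder_def ex_def l_def powr_3_2 by (simp add: mult_ac)
    finally show ?thesis .
  qed
  have den: "(\<Sum>n. fser n x) = (\<Sum>m. sqrt 2 * exp (-((real (Suc m))^2 * pi^2 * t)) * l_coef (Suc m) u0 * cos (real (Suc m) * pi * x))"
    unfolding fser_def ex_def l_def e_cos_def by (simp add: mult_ac)
  show ?thesis
    unfolding burgers_flow_def ColeHopf_C_def dv
    using num den by (simp add: hf)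
qed

lemma has_sum_pos_Suc:
  fixes f :: "nat \<Rightarrow> real"
  assumes s: "summable (\<lambda>m. f (Suc m))" and p: "\<And>m. 0 \<le> f (Suc m)"
  shows "(f has_sum (\<Sum>m. f (Suc m))) {0<..}"
proof -
  have "((\<lambda>m. f (Suc m)) has_sum (\<Sum>m. f (Suc m))) UNIV"
    by (rule norm_summable_imp_has_sum) (use s p in \<open>auto simp: summable_sums\<close>)
  moreover have "{0<..} = Suc ` (UNIV :: nat set)" by (auto simp: image_iff gr0_conv_Suc)
  ultimately show ?thesis using has_sum_reindex[of Suc UNIV f] by (simp add: o_def)
qed

lemma has_sum_Suc_to_sums:
  fixes f :: "nat \<Rightarrow> real"
  assumes "(f has_sum S) {0<..}"
  shows "(\<lambda>m. f (Suc m)) sums S"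
proof -
  have "{0<..} = Suc ` (UNIV :: nat set)" by (auto simp: image_iff gr0_conv_Suc)
  then have "((\<lambda>m. f (Suc m)) has_sum S) UNIV" using assms has_sum_reindex[of Suc UNIV f] by (simp add: o_def)
  then show ?thesis by (rule has_sum_imp_sums)
qed

lemma abs_prod_le:
  fixes f g :: "nat \<Rightarrow> real"
  assumes "\<And>k. \<bar>f k\<bar> \<le> g k"
  shows "\<bar>prod_list (map f xs)\<bar> \<le> prod_list (map g xs)"
proof (induction xs)
  case Nil then show ?case by simp
next
  case (Cons k xs)
  have "\<bar>f k\<bar> * \<bar>prod_list (map f xs)\<bar> \<le> g k * prod_list (map g xs)"
    using Cons assms[of k] by (intro mult_mono) auto
  then show ?case by (simp add: abs_mult)
qed

theorem mainTheorem1: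
  fixes u0 :: "real \<Rightarrow> real" and t :: real
  assumes meas: "u0 \<in> borel_measurable lborel"
    and L2: "set_integrable lborel {0..1} (\<lambda>s. (u0 s)^2)"
    and small: "2 * exp (L2norm01 u0) * L2norm01 u0 < 1"
    and tpos: "t > 0"
  shows "(\<forall>x\<in>{0..1}. ((\<lambda>\<nu>. norm (series_term t u0 \<nu> x)) summable_on idxA)
            \<and> burgers_flow t u0 x = (\<Sum>\<^sub>\<infinity>\<nu>\<in>idxA. series_term t u0 \<nu> x))
         \<and> uniform_limit {0..1} (\<lambda>F x. \<Sum>\<nu>\<in>F. series_term t u0 \<nu> x)
              (burgers_flow t u0) (finite_subsets_at_top idxA)"
proof -
  have C: "summable (\<lambda>m. sqrt 2 * \<bar>l_coef (Suc m) u0\<bar>) \<and> (\<Sum>m. sqrt 2 * \<bar>l_coef (Suc m) u0\<bar>) \<le> 1/2"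
    by (rule core[OF meas L2 small])
  define S1 where "S1 = (\<Sum>m. sqrt 2 * \<bar>l_coef (Suc m) u0\<bar>)"
  have sS: "summable (\<lambda>m. sqrt 2 * \<bar>l_coef (Suc m) u0\<bar>)" and S1b: "S1 \<le> 1/2" using C S1_def by auto
  have lb: "\<bar>l_coef (Suc m) u0\<bar> \<le> 1" for m
  proof -
    have "sqrt 2 * \<bar>l_coef (Suc m) u0\<bar> \<le> S1"
      unfolding S1_def using sum_le_suminf[OF sS, of "{m}"] by simp
    then have "sqrt 2 * \<bar>l_coef (Suc m) u0\<bar> \<le> 1/2" using S1b by simp
    moreover have "1 * \<bar>l_coef (Suc m) u0\<bar> \<le> sqrt 2 * \<bar>l_coef (Suc m) u0\<bar>"
      by (intro mult_right_mono) auto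
    ultimately show ?thesis by simp
  qed
  define a where "a x n = 2 powr (3/2) * real n * pi * sin (real n * pi * x) * exp (-((real n)^2 * pi^2 * t)) * l_coef n u0" for x n
  define b where "b x k = sqrt 2 * exp (-((real k)^2 * pi^2 * t)) * l_coef k u0 * cos (real k * pi * x)" for x k
  define A where "A n = 2 powr (3/2) * real n * pi * exp (-((real n)^2 * pi^2 * t)) * \<bar>l_coef n u0\<bar>" for n
  define B where "B k = sqrt 2 * exp (-((real k)^2 * pi^2 * t)) * \<bar>l_coef k u0\<bar>" for k
  have A0: "0 \<le> A n" for n unfolding A_def by simp
  have B0: "0 \<le> B k" for k unfolding B_def by simp
  have aA: "\<bar>a x n\<bar> \<le> A n" for x n
  proof -
    have "\<bar>a x n\<bar> = (2 powr (3/2) * real n * pi * exp (-((real n)^2 * pi^2 * t)) * \<bar>l_coef n u0\<bar>) * \<bar>sin (real n * pi * x)\<bar>"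
      unfolding a_def by (simp add: abs_mult mult_ac)
    also have "\<dots> \<le> (2 powr (3/2) * real n * pi * exp (-((real n)^2 * pi^2 * t)) * \<bar>l_coef n u0\<bar>) * 1"
      by (intro mult_left_mono) auto
    finally show ?thesis unfolding A_def by simp
  qed
  have bB: "\<bar>b x k\<bar> \<le> B k" for x k
  proof -
    have "\<bar>b x k\<bar> = (sqrt 2 * exp (-((real k)^2 * pi^2 * t)) * \<bar>l_coef k u0\<bar>) * \<bar>cos (real k * pi * x)\<bar>"
      unfolding b_def by (simp add: abs_mult mult_ac)
    also have "\<dots> \<le> (sqrt 2 * exp (-((real k)^2 * pi^2 * t)) * \<bar>l_coef k u0\<bar>) * 1"
      by (intro mult_left_mono) auto
    finally show ?thesis unfolding B_def by simp
  qed
  have Bl: "B k \<le> sqrt 2 * \<bar>l_coef k u0\<bar>" for k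
  proof -
    have "exp (-((real k)^2 * pi^2 * t)) \<le> 1" using tpos by simp
    then have "B k \<le> sqrt 2 * 1 * \<bar>l_coef k u0\<bar>" unfolding B_def
      by (intro mult_mono) auto
    then show ?thesis by simp
  qed
  have hsL: "((\<lambda>k. sqrt 2 * \<bar>l_coef k u0\<bar>) has_sum S1) {0<..}"
    unfolding S1_def by (rule has_sum_pos_Suc[OF sS]) simp
  have Ls: "(\<lambda>k. sqrt 2 * \<bar>l_coef k u0\<bar>) summable_on {0<..}" using has_sum_imp_summable[OF hsL] .
  have Bs: "B summable_on {0<..}"
    by (rule summable_on_comparison_test[OF Ls]) (use Bl B0 in auto)
  have BS: "infsum B {0<..} \<le> 1/2"
  proof -
    have "infsum B {0<..} \<le> infsum (\<lambda>k. sqrt 2 * \<bar>l_coef k u0\<bar>) {0<..}"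
      by (rule infsum_mono[OF Bs Ls]) (use Bl in auto)
    also have "\<dots> = S1" using infsumI[OF hsL] .
    finally show ?thesis using S1b by simp
  qed
  have As: "A summable_on UNIV"
  proof -
    have "summable A"
    proof (rule summable_comparison_test[OF _ summable_mult[OF summable_n_exp[OF tpos], of "2 powr (3/2) * pi"]])
      have "A n \<le> 2 powr (3/2) * pi * (real n * exp (-((real n)^2 * pi^2 * t)))" for n
      proof (cases n)
        case 0 then show ?thesis by (simp add: A_def)
      next
        case (Suc m)
        have "A n = (2 powr (3/2) * pi * (real n * exp (-((real n)^2 * pi^2 * t)))) * \<bar>l_coef n u0\<bar>"
          unfolding A_def by (simp add: mult_ac)
        also have "\<dots> \<le> (2 powr (3/2) * pi * (real n * exp (-((real n)^2 * pi^2 * t)))) * 1"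
          using lb[of m] Suc by (intro mult_left_mono) auto
        finally show ?thesis by simp
      qed
      then show "\<exists>N. \<forall>n\<ge>N. norm (A n) \<le> 2 powr (3/2) * pi * (real n * exp (-((real n)^2 * pi^2 * t)))"
        using A0 by auto
    qed
    then show ?thesis using summable_on_UNIV_nonneg_real_iff[of A] A0 by simp
  qed
  have bs: "(\<lambda>k. \<bar>b x k\<bar>) summable_on {0<..}" for x
    by (rule summable_on_comparison_test[OF Bs]) (use bB in auto)
  have bl: "infsum (\<lambda>k. \<bar>b x k\<bar>) {0<..} < 1" for x
  proof -
    have "infsum (\<lambda>k. \<bar>b x k\<bar>) {0<..} \<le> infsum B {0<..}"
      by (rule infsum_mono[OF bs Bs]) (use bB in auto)
    then show ?thesis using BS by simp
  qed
  have as: "(\<lambda>n. \<bar>a x n\<bar>) summable_on UNIV" for x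
    by (rule summable_on_comparison_test[OF As]) (use aA in auto)
  define T where "T x \<nu> = a x (hd \<nu>) * ((-1)^(length \<nu> - 1) * prod_list (map (b x) (tl \<nu>)))" for x \<nu>
  have stT: "series_term t u0 \<nu> x = T x \<nu>" if nuA: "\<nu> \<in> idxA" for \<nu> x
  proof -
    have "\<nu> \<noteq> []" using nuA unfolding idxA_def by auto
    then obtain n xs where \<nu>: "\<nu> = n # xs" by (cases \<nu>) auto
    show ?thesis unfolding \<nu> T_def a_def b_def by (simp add: series_term_form)
  qed
  have burg: "burgers_flow t u0 x = infsum (a x) UNIV / (1 + infsum (b x) {0<..})" for x
  proof -
    have e1: "burgers_flow t u0 x = (\<Sum>m. a x (Suc m)) / (1 + (\<Sum>m. b x (Suc m)))"
      using burgers_eq[OF tpos lb sS, of x] unfolding a_def b_def .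
    have asu: "a x summable_on UNIV"
      by (rule abs_summable_summable) (use as[of x] in simp)
    have "(a x) sums (infsum (a x) UNIV)" by (rule has_sum_imp_sums[OF has_sum_infsum[OF asu]])
    then have "(\<Sum>m. a x (Suc m)) = infsum (a x) UNIV - a x 0"
      using suminf_split_head[of "a x"] by (simp add: sums_iff)
    then have e2: "(\<Sum>m. a x (Suc m)) = infsum (a x) UNIV" by (simp add: a_def)
    have bsu: "b x summable_on {0<..}"
      by (rule abs_summable_summable) (use bs[of x] in simp)
    have e3: "(\<Sum>m. b x (Suc m)) = infsum (b x) {0<..}"
      using has_sum_Suc_to_sums[OF has_sum_infsum[OF bsu]] by (simp add: sums_iff)
    show ?thesis using e1 e2 e3 by simp
  qed
  have part1: "\<forall>x\<in>{0..1}. ((\<lambda>\<nu>. norm (series_term t u0 \<nu> x)) summable_on idxA)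
            \<and> burgers_flow t u0 x = (\<Sum>\<^sub>\<infinity>\<nu>\<in>idxA. series_term t u0 \<nu> x)"
  proof
    fix x :: real assume x: "x \<in> {0..1}"
    have h1: "(T x has_sum infsum (a x) UNIV / (1 + infsum (b x) {0<..})) idxA"
      using idxA_has_sum(1)[OF bs[of x] bl[of x] as[of x]] unfolding T_def .
    have h2: "(\<lambda>\<nu>. \<bar>T x \<nu>\<bar>) summable_on idxA"
      using idxA_has_sum(2)[OF bs[of x] bl[of x] as[of x]] unfolding T_def .
    show "((\<lambda>\<nu>. norm (series_term t u0 \<nu> x)) summable_on idxA)
            \<and> burgers_flow t u0 x = (\<Sum>\<^sub>\<infinity>\<nu>\<in>idxA. series_term t u0 \<nu> x)"
    proof
      show "(\<lambda>\<nu>. norm (series_term t u0 \<nu> x)) summable_on idxA"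
        using h2 by (rule summable_on_cong[THEN iffD1, rotated]) (simp add: stT)
      have "((\<lambda>\<nu>. series_term t u0 \<nu> x) has_sum infsum (a x) UNIV / (1 + infsum (b x) {0<..})) idxA"
        using h1 by (rule has_sum_cong[THEN iffD1, rotated]) (simp add: stT)
      then show "burgers_flow t u0 x = (\<Sum>\<^sub>\<infinity>\<nu>\<in>idxA. series_term t u0 \<nu> x)"
        using burg[of x] infsumI by metis
    qed
  qed
  define TA where "TA \<nu> = A (hd \<nu>) * ((-1)^(length \<nu> - 1) * prod_list (map B (tl \<nu>)))" for \<nu>
  have Bas: "(\<lambda>k. \<bar>B k\<bar>) summable_on {0<..}" using Bs B0 by simp
  have Bal: "infsum (\<lambda>k. \<bar>B k\<bar>) {0<..} < 1" using BS B0 by simp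
  have Aas: "(\<lambda>n. \<bar>A n\<bar>) summable_on UNIV" using As A0 by simp
  have Ms: "(\<lambda>\<nu>. \<bar>TA \<nu>\<bar>) summable_on idxA"
    using idxA_has_sum(2)[OF Bas Bal Aas] unfolding TA_def .
  have bound: "\<bar>series_term t u0 \<nu> x\<bar> \<le> \<bar>TA \<nu>\<bar>" if "\<nu> \<in> idxA" "x \<in> {0..1}" for \<nu> x
  proof -
    have "\<bar>series_term t u0 \<nu> x\<bar> = \<bar>a x (hd \<nu>)\<bar> * \<bar>prod_list (map (b x) (tl \<nu>))\<bar>"
      unfolding stT[OF that(1)] T_def by (simp add: abs_mult)
    also have "\<dots> \<le> A (hd \<nu>) * prod_list (map B (tl \<nu>))"
      by (intro mult_mono aA abs_prod_le bB) (auto simp: A0)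
    also have "\<dots> = \<bar>TA \<nu>\<bar>"
      unfolding TA_def using A0 B0 by (simp add: abs_mult abs_prod_list)
    finally show ?thesis .
  qed
  have ul: "uniform_limit {0..1} (\<lambda>F x. \<Sum>\<nu>\<in>F. series_term t u0 \<nu> x)
              (\<lambda>x. infsum (\<lambda>\<nu>. series_term t u0 \<nu> x) idxA) (finite_subsets_at_top idxA)"
    by (rule uniform_limit_infsum[OF Ms bound])
  have part2: "uniform_limit {0..1} (\<lambda>F x. \<Sum>\<nu>\<in>F. series_term t u0 \<nu> x)
              (burgers_flow t u0) (finite_subsets_at_top idxA)"
    using ul by (rule uniform_limit_cong'[THEN iffD1, rotated 2]) (use part1 in auto)
  show ?thesis using part1 part2 by blast
qed

end
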